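(* For each $k\in\mathbb N$, the class of bilabelled graphs $\mathcal P_k$ is closed under taking bilabelled minors.
   Context: A $(k,k)$-bilabelled graph is $\boldsymbol F=(F,\boldsymbol u,\boldsymbol v)$, $\boldsymbol u,\boldsymbol v\in V(F)^k$. A bilabelled minor of $\boldsymbol F$ is a $(k,k)$-bilabelled graph obtained from $\boldsymbol F$ by a sequence of edge contractions, edge deletions and deletions of unlabelled vertices (labels remain on their vertices). Series composition $\boldsymbol F\cdot\boldsymbol F'$: disjoint union with $v_i$ identified with $u'_i$, multiple edges removed, labels $(\boldsymbol u,\boldsymbol v')$. Parallel composition $\boldsymbol F\odot\boldsymbol F'$: identify $u_i$ with $u'_i$, $v_i$ with $v'_i$, multiple edges removed. For $\sigma\in\mathfrak S_{2k}$, $\boldsymbol F^\sigma$ has in-labels $(w_{\sigma(1)},\dots,w_{\sigma(k)})$, out-labels $(w_{\sigma(k+1)},\dots,w_{\sigma(2k)})$, $\boldsymbol w=\boldsymbol u\boldsymbol v$. $\mathscr C_k$ = cyclic group of rotations of $(1,\dots,k,2k,\dots,k+1)$. $\boldsymbol C_k$: vertices $[2k]$, in-labels $(1,\dots,k)$, out-labels $(k+1,\dots,2k)$, edges $\{i,i+1\}$ ($i\in[2k]\setminus\{k,2k\}$), $\{1,k+1\},\{k,2k\}$; $\boldsymbol M_k$: same vertices/labels, edges $\{i,i+k\}$. $\mathcal Q_k^P,\mathcal Q_k^S$ = bilabelled minors of $\boldsymbol C_k,\boldsymbol M_k$; $\mathcal Q_k$ their union. $\mathcal P_k$ = smallest class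 containing $\mathcal Q_k$, closed under series composition, $\boldsymbol F\mapsto\boldsymbol F\odot\boldsymbol Q$ ($\boldsymbol Q\in\mathcal Q_k^P$), and $\boldsymbol F\mapsto\boldsymbol F^\sigma$ ($\sigma\in\mathscr C_k$). *)

theory Defs
  imports Main
begin

text \<open>A (k,k)-bilabelled graph: (vertex set, edge set, in-labels u, out-labels v).
  Vertices are natural numbers; an edge is a set of one (loop) or two vertices.
  Multiple edges cannot occur (edges form a set). All indices are 0-based.\<close>
type_synonym bgraph = "nat set \<times> nat set set \<times> nat list \<times> nat list"

definition bg_map :: "(nat \<Rightarrow> nat) \<Rightarrow> bgraph \<Rightarrow> bgraph" where
  "bg_map f G = (case G of (V, E, u, v) \<Rightarrow>
     (f ` V, (\<lambda>e. f ` e) ` E, map f u, map f v))"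

definition bg_iso :: "bgraph \<Rightarrow> bgraph \<Rightarrow> bool" where
  "bg_iso F G = (\<exists>f. bij_betw f (fst F) (fst G) \<and> G = bg_map f F)"

definition quot_map :: "(nat \<times> nat) set \<Rightarrow> nat \<Rightarrow> nat" where
  "quot_map R x = (LEAST y. (x, y) \<in> (R \<union> R\<inverse>)\<^sup>*)"

text \<open>Series composition: disjoint union (F on even, F' on odd numbers),
  v_i identified with u'_i, multiple edges removed, labels (u, v').\<close>
definition bg_series :: "bgraph \<Rightarrow> bgraph \<Rightarrow> bgraph" where
  "bg_series F F' = (case F of (V, E, u, v) \<Rightarrow> case F' of (V', E', u', v') \<Rightarrow>
     (let f1 = (\<lambda>x::nat. 2 * x); f2 = (\<lambda>x::nat. 2 * x + 1);
          q = quot_map (set (zip (map f1 v) (map f2 u')))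
      in (q ` (f1 ` V \<union> f2 ` V'),
          (\<lambda>e. q ` e) ` ((\<lambda>e. f1 ` e) ` E \<union> (\<lambda>e. f2 ` e) ` E'),
          map (q \<circ> f1) u, map (q \<circ> f2) v')))"

definition bg_parallel :: "bgraph \<Rightarrow> bgraph \<Rightarrow> bgraph" where
  "bg_parallel F F' = (case F of (V, E, u, v) \<Rightarrow> case F' of (V', E', u', v') \<Rightarrow>
     (let f1 = (\<lambda>x::nat. 2 * x); f2 = (\<lambda>x::nat. 2 * x + 1);
          q = quot_map (set (zip (map f1 u) (map f2 u')) \<union> set (zip (map f1 v) (map f2 v')))
      in (q ` (f1 ` V \<union> f2 ` V'),
          (\<lambda>e. q ` e) ` ((\<lambda>e. f1 ` e) ` E \<union> (\<lambda>e. f2 ` e) ` E'),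
          map (q \<circ> f1) u, map (q \<circ> f1) v)))"

text \<open>F^sigma for sigma a permutation of {0..<2k} (0-based), w = u v.\<close>
definition bg_perm :: "(nat \<Rightarrow> nat) \<Rightarrow> bgraph \<Rightarrow> bgraph" where
  "bg_perm \<sigma> F = (case F of (V, E, u, v) \<Rightarrow>
     (V, E, map (\<lambda>i. (u @ v) ! (\<sigma> i)) [0..<length u],
            map (\<lambda>i. (u @ v) ! (\<sigma> (length u + i))) [0..<length u]))"

text \<open>The cyclic order (1,...,k,2k,...,k+1), 0-based, and its group of rotations.\<close>
definition cyc_order :: "nat \<Rightarrow> nat list" where
  "cyc_order k = [0..<k] @ rev [k..<2 * k]"

definition rot_group :: "nat \<Rightarrow> (nat \<Rightarrow> nat) set" where
  "rot_group k = {\<sigma>. (\<forall>i. i \<ge> 2 * k \<longrightarrow> \<sigma> i = i) \<and>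
     (\<exists>r. \<forall>j < 2 * k. \<sigma> (cyc_order k ! j) = cyc_order k ! ((j + r) mod (2 * k)))}"

definition bgC :: "nat \<Rightarrow> bgraph" where
  "bgC k = ({0..<2 * k},
            {{i, i + 1} | i. i + 1 < k} \<union> {{i, i + 1} | i. k \<le> i \<and> i + 1 < 2 * k}
              \<union> (if 1 \<le> k then {{0, k}, {k - 1, 2 * k - 1}} else {}),
            [0..<k], [k..<2 * k])"

definition bgM :: "nat \<Rightarrow> bgraph" where
  "bgM k = ({0..<2 * k}, {{i, i + k} | i. i < k}, [0..<k], [k..<2 * k])"

inductive bminor_step :: "bgraph \<Rightarrow> bgraph \<Rightarrow> bool" where
  edel: "e \<in> E \<Longrightarrow> bminor_step (V, E, u, v) (V, E - {e}, u, v)"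
| vdel: "x \<in> V \<Longrightarrow> x \<notin> set u \<Longrightarrow> x \<notin> set v \<Longrightarrow>
         bminor_step (V, E, u, v) (V - {x}, {e \<in> E. x \<notin> e}, u, v)"
| contr: "{a, b} \<in> E \<Longrightarrow> a \<noteq> b \<Longrightarrow>
         bminor_step (V, E, u, v) (bg_map (\<lambda>x. if x = b then a else x) (V, E - {{a, b}}, u, v))"

definition bminor :: "bgraph \<Rightarrow> bgraph \<Rightarrow> bool" where
  "bminor F G = bminor_step\<^sup>*\<^sup>* F G"

definition QP :: "nat \<Rightarrow> bgraph set" where
  "QP k = {G. \<exists>H. bminor (bgC k) H \<and> bg_iso H G}"

definition QS :: "nat \<Rightarrow> bgraph set" where
  "QS k = {G. \<exists>H. bminor (bgM k) H \<and> bg_iso H G}"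

definition Q :: "nat \<Rightarrow> bgraph set" where
  "Q k = QP k \<union> QS k"

inductive_set P :: "nat \<Rightarrow> bgraph set" for k :: nat where
  base: "G \<in> Q k \<Longrightarrow> G \<in> P k"
| series: "F \<in> P k \<Longrightarrow> F' \<in> P k \<Longrightarrow> bg_series F F' \<in> P k"
| parallel: "F \<in> P k \<Longrightarrow> H \<in> QP k \<Longrightarrow> bg_parallel F H \<in> P k"
| perm: "F \<in> P k \<Longrightarrow> \<sigma> \<in> rot_group k \<Longrightarrow> bg_perm \<sigma> F \<in> P k"
| iso: "F \<in> P k \<Longrightarrow> bg_iso F G \<Longrightarrow> G \<in> P k"

end

theory Submission
  imports Defs
begin


declare if_image_distrib[simp del]

abbreviation rn :: "nat \<Rightarrow> nat \<Rightarrow> nat \<Rightarrow> nat" where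
  "rn b a \<equiv> (\<lambda>x. if x = b then a else x)"

definition eqcl :: "(nat \<times> nat) set \<Rightarrow> (nat \<times> nat) set" where
  "eqcl R = (R \<union> R\<inverse>)\<^sup>*"

definition mapR :: "(nat \<Rightarrow> nat) \<Rightarrow> (nat \<times> nat) set \<Rightarrow> (nat \<times> nat) set" where
  "mapR S R = (\<lambda>(x, y). (S x, S y)) ` R"

lemma eqcl_refl[simp]: "(x, x) \<in> eqcl R"
  by (simp add: eqcl_def)

lemma eqcl_base: "(x, y) \<in> R \<Longrightarrow> (x, y) \<in> eqcl R"
  by (auto simp: eqcl_def)

lemma eqcl_sym: "(x, y) \<in> eqcl R \<Longrightarrow> (y, x) \<in> eqcl R"
proof -
  assume "(x, y) \<in> eqcl R"
  hence "(x, y) \<in> ((R \<union> R\<inverse>)\<inverse>)\<^sup>*" by (simp add: eqcl_def converse_Un Un_commute)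
  thus ?thesis by (simp add: eqcl_def rtrancl_converse)
qed

lemma eqcl_trans: "(x, y) \<in> eqcl R \<Longrightarrow> (y, z) \<in> eqcl R \<Longrightarrow> (x, z) \<in> eqcl R"
  unfolding eqcl_def by (rule rtrancl_trans)

lemma eqcl_respect:
  assumes "\<And>a b. (a, b) \<in> R \<Longrightarrow> \<phi> a = \<phi> b" and "(x, y) \<in> eqcl R"
  shows "\<phi> x = \<phi> y"
  using assms(2) unfolding eqcl_def
proof (induction rule: rtrancl_induct)
  case base then show ?case by simp
next
  case (step y z) then show ?case using assms(1) by auto
qed

lemma eqcl_mono:
  assumes "\<And>a b. (a, b) \<in> R \<Longrightarrow> (a, b) \<in> eqcl R'" and "(x, y) \<in> eqcl R"
  shows "(x, y) \<in> eqcl R'"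
  using assms(2) unfolding eqcl_def[of R]
proof (induction rule: rtrancl_induct)
  case base then show ?case by simp
next
  case (step y z) then show ?case using assms(1) eqcl_sym eqcl_trans by blast
qed

lemma quot_map_rel: "(x, quot_map R x) \<in> eqcl R"
  unfolding quot_map_def eqcl_def[symmetric]
  by (rule LeastI[of "\<lambda>y. (x, y) \<in> eqcl R" x]) simp

lemma quot_map_eq: "quot_map R x = quot_map R y \<longleftrightarrow> (x, y) \<in> eqcl R"
proof
  assume "quot_map R x = quot_map R y"
  then show "(x, y) \<in> eqcl R" using quot_map_rel[of x R] quot_map_rel[of y R]
    by (metis eqcl_sym eqcl_trans)
next
  assume h: "(x, y) \<in> eqcl R"
  have "\<And>z. (x, z) \<in> eqcl R \<longleftrightarrow> (y, z) \<in> eqcl R"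
    using h eqcl_sym eqcl_trans by blast
  then show "quot_map R x = quot_map R y"
    unfolding quot_map_def eqcl_def[symmetric] by simp
qed

lemma eqcl_isolated:
  assumes "(x, y) \<in> eqcl R" "x \<notin> Domain R" "x \<notin> Range R"
  shows "y = x"
proof -
  have "(x, y) \<in> (R \<union> R\<inverse>)\<^sup>*" using assms(1) by (simp add: eqcl_def)
  thus ?thesis
  proof (cases rule: converse_rtranclE)
    case (step c) then show ?thesis using assms(2,3) by blast
  qed simp
qed



definition wfg :: "bgraph \<Rightarrow> bool" where
  "wfg F = (case F of (V, E, u, v) \<Rightarrow> finite V \<and> (\<forall>e\<in>E. e \<subseteq> V \<and> (\<exists>x y. e = {x, y}))
      \<and> set u \<subseteq> V \<and> set v \<subseteq> V)"

lemma wfg_simp: "wfg (V, E, u, v) \<longleftrightarrow> finite V \<and> (\<forall>e\<in>E. e \<subseteq> V \<and> (\<exists>x y. e = {x, y}))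
      \<and> set u \<subseteq> V \<and> set v \<subseteq> V"
  by (simp add: wfg_def)

lemma bg_map_simp[simp]: "bg_map f (V, E, u, v) = (f ` V, (\<lambda>e. f ` e) ` E, map f u, map f v)"
  by (simp add: bg_map_def)

lemma bg_map_comp: "bg_map g (bg_map f F) = bg_map (g \<circ> f) F"
  by (cases F) (auto simp: image_comp)

lemma bg_map_cong:
  assumes "wfg (V, E, u, v)" "\<And>x. x \<in> V \<Longrightarrow> f x = g x"
  shows "bg_map f (V, E, u, v) = bg_map g (V, E, u, v)"
proof -
  have "(\<lambda>e. f ` e) ` E = (\<lambda>e. g ` e) ` E"
  proof (rule image_cong[OF refl])
    fix e assume "e \<in> E" then have "e \<subseteq> V" using assms(1) by (simp add: wfg_simp)
    then show "f ` e = g ` e" using assms(2) by (intro image_cong[OF refl]) auto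
  qed
  moreover have "map f u = map g u" "map f v = map g v"
    using assms by (auto simp: wfg_simp intro!: map_cong)
  moreover have "f ` V = g ` V" using assms(2) by auto
  ultimately show ?thesis by simp
qed

lemma bg_map_id: "wfg (V, E, u, v) \<Longrightarrow> bg_map (\<lambda>x. x) (V, E, u, v) = (V, E, u, v)"
  by simp

lemma wfg_bg_map: assumes "wfg F" shows "wfg (bg_map f F)"
proof -
  obtain V E u v where F: "F = (V, E, u, v)" by (cases F) auto
  have "\<exists>x y. f ` e = {x, y}" if "e \<in> E" for e
  proof -
    obtain x y where "e = {x, y}" using assms F \<open>e \<in> E\<close> by (auto simp: wfg_simp)
    then show ?thesis by auto
  qed
  then show ?thesis using assms F by (auto simp: wfg_simp)
qed

lemma bg_iso_alt: "bg_iso F G \<longleftrightarrow> (\<exists>f. inj_on f (fst F) \<and> G = bg_map f F)"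
  unfolding bg_iso_def bij_betw_def
  by (cases F) auto

lemma kern_iso:
  assumes w: "wfg (V, E, u, v)" and k: "\<And>x y. x \<in> V \<Longrightarrow> y \<in> V \<Longrightarrow> h1 x = h1 y \<longleftrightarrow> h2 x = h2 y"
  shows "bg_iso (bg_map h1 (V, E, u, v)) (bg_map h2 (V, E, u, v))"
proof -
  define f where "f = (\<lambda>z. h2 (inv_into V h1 z))"
  have fh: "f (h1 x) = h2 x" if "x \<in> V" for x
  proof -
    have "inv_into V h1 (h1 x) \<in> V" "h1 (inv_into V h1 (h1 x)) = h1 x"
      using that by (auto intro: inv_into_into f_inv_into_f)
    then show ?thesis unfolding f_def using k that by blast
  qed
  have inj: "inj_on f (h1 ` V)"
    by (rule inj_onI) (auto simp: fh k)
  have "bg_map f (bg_map h1 (V, E, u, v)) = bg_map (f \<circ> h1) (V, E, u, v)" by (rule bg_map_comp)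
  also have "\<dots> = bg_map h2 (V, E, u, v)" by (rule bg_map_cong[OF w]) (simp add: fh)
  finally have eq: "bg_map f (bg_map h1 (V, E, u, v)) = bg_map h2 (V, E, u, v)" .
  show ?thesis unfolding bg_iso_alt
  proof (intro exI conjI)
    show "inj_on f (fst (bg_map h1 (V, E, u, v)))" using inj by simp
    show "bg_map h2 (V, E, u, v) = bg_map f (bg_map h1 (V, E, u, v))" by (rule eq[symmetric])
  qed
qed

lemma iso_refl: "wfg F \<Longrightarrow> bg_iso F F"
  unfolding bg_iso_alt by (cases F) (auto intro!: exI[of _ "\<lambda>x. x"])

lemma iso_sym: assumes "wfg F" "bg_iso F G" shows "bg_iso G F"
proof -
  obtain V E u v where F: "F = (V, E, u, v)" by (cases F) auto
  obtain f where f: "inj_on f V" "G = bg_map f F" using assms(2) F by (auto simp: bg_iso_alt)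
  have "bg_iso (bg_map f (V, E, u, v)) (bg_map (\<lambda>x. x) (V, E, u, v))"
    by (rule kern_iso) (use assms(1) F f in \<open>auto simp: inj_on_eq_iff\<close>)
  then show ?thesis using f F by simp
qed

lemma iso_trans: assumes "wfg F" "bg_iso F G" "bg_iso G H" shows "bg_iso F H"
proof -
  obtain V E u v where F: "F = (V, E, u, v)" by (cases F) auto
  obtain f where f: "inj_on f V" "G = bg_map f F" using assms(2) F by (auto simp: bg_iso_alt)
  obtain g where g: "inj_on g (fst G)" "H = bg_map g G" using assms(3) by (auto simp: bg_iso_alt)
  have "inj_on (g \<circ> f) V" using f g F by (auto intro: comp_inj_on)
  moreover have "H = bg_map (g \<circ> f) F" using f g by (simp add: bg_map_comp)
  ultimately show ?thesis using F by (auto simp: bg_iso_alt)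
qed

lemma wfg_iso: "wfg F \<Longrightarrow> bg_iso F G \<Longrightarrow> wfg G"
  by (auto simp: bg_iso_alt wfg_bg_map)

lemma eqcl_insert: "(x, y) \<in> eqcl R \<Longrightarrow> (x, y) \<in> eqcl (insert p R)"
  by (rule eqcl_mono[of R]) (auto intro: eqcl_base)

lemma rn_kernel:
  "(quot_map (mapR (rn b0 a0) R) (rn b0 a0 x) = quot_map (mapR (rn b0 a0) R) (rn b0 a0 y))
     \<longleftrightarrow> (x, y) \<in> eqcl (insert (a0, b0) R)"
proof
  let ?S = "rn b0 a0"
  have zS: "(z, ?S z) \<in> eqcl (insert (a0, b0) R)" for z
    by (cases "z = b0") (auto intro: eqcl_sym eqcl_base)
  assume "quot_map (mapR ?S R) (?S x) = quot_map (mapR ?S R) (?S y)"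
  then have "(?S x, ?S y) \<in> eqcl (mapR ?S R)" by (simp add: quot_map_eq)
  then have "(?S x, ?S y) \<in> eqcl (insert (a0, b0) R)"
  proof (rule eqcl_mono[rotated])
    fix a b assume "(a, b) \<in> mapR ?S R"
    then obtain c d where "(c, d) \<in> R" "a = ?S c" "b = ?S d" by (auto simp: mapR_def)
    then show "(a, b) \<in> eqcl (insert (a0, b0) R)"
      using zS[of c] zS[of d] by (meson eqcl_base insertCI eqcl_sym eqcl_trans)
  qed
  then show "(x, y) \<in> eqcl (insert (a0, b0) R)"
    using zS[of x] zS[of y] by (meson eqcl_sym eqcl_trans)
next
  let ?S = "rn b0 a0"
  assume "(x, y) \<in> eqcl (insert (a0, b0) R)"
  then show "quot_map (mapR ?S R) (?S x) = quot_map (mapR ?S R) (?S y)"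
  proof (rule eqcl_respect[rotated])
    fix a b assume "(a, b) \<in> insert (a0, b0) R"
    then show "quot_map (mapR ?S R) (?S a) = quot_map (mapR ?S R) (?S b)"
    proof
      assume "(a, b) = (a0, b0)" then show ?thesis by auto
    next
      assume "(a, b) \<in> R" then have "(?S a, ?S b) \<in> mapR ?S R" by (force simp: mapR_def)
      then show ?thesis by (simp add: quot_map_eq eqcl_base)
    qed
  qed
qed

lemma merge_kernel:
  "(rn (quot_map R b0) (quot_map R a0) (quot_map R x) = rn (quot_map R b0) (quot_map R a0) (quot_map R y))
     \<longleftrightarrow> (x, y) \<in> eqcl (insert (a0, b0) R)"
proof
  let ?q = "quot_map R"
  assume h: "rn (?q b0) (?q a0) (?q x) = rn (?q b0) (?q a0) (?q y)"
  have ab: "(a0, b0) \<in> eqcl (insert (a0, b0) R)" by (auto intro: eqcl_base)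
  show "(x, y) \<in> eqcl (insert (a0, b0) R)"
  proof (cases "?q x = ?q y")
    case True then show ?thesis by (simp add: quot_map_eq eqcl_insert)
  next
    case False
    then have "(?q x = ?q b0 \<and> ?q y = ?q a0) \<or> (?q x = ?q a0 \<and> ?q y = ?q b0)"
      using h by (auto split: if_splits)
    then show ?thesis
      by (metis ab eqcl_insert eqcl_sym eqcl_trans quot_map_eq)
  qed
next
  let ?q = "quot_map R"
  assume "(x, y) \<in> eqcl (insert (a0, b0) R)"
  then show "rn (?q b0) (?q a0) (?q x) = rn (?q b0) (?q a0) (?q y)"
  proof (rule eqcl_respect[rotated])
    fix a b assume "(a, b) \<in> insert (a0, b0) R"
    then show "rn (?q b0) (?q a0) (?q a) = rn (?q b0) (?q a0) (?q b)"
    proof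
      assume "(a, b) = (a0, b0)" then show ?thesis by auto
    next
      assume "(a, b) \<in> R" then have "?q a = ?q b" by (simp add: quot_map_eq eqcl_base)
      then show ?thesis by simp
    qed
  qed
qed

lemma merge_iso:
  assumes "wfg H"
  shows "bg_iso (bg_map (quot_map (mapR (rn b0 a0) R)) (bg_map (rn b0 a0) H))
                (bg_map (rn (quot_map R b0) (quot_map R a0) \<circ> quot_map R) H)"
proof -
  obtain V E u v where H: "H = (V, E, u, v)" by (cases H) auto
  have "bg_iso (bg_map (quot_map (mapR (rn b0 a0) R) \<circ> rn b0 a0) H)
                (bg_map (rn (quot_map R b0) (quot_map R a0) \<circ> quot_map R) H)"
    unfolding H by (rule kern_iso) (use assms H in \<open>simp_all only: comp_apply rn_kernel merge_kernel\<close>)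
  then show ?thesis by (simp add: bg_map_comp)
qed



definition lenk :: "nat \<Rightarrow> bgraph \<Rightarrow> bool" where
  "lenk k F = (case F of (V, E, u, v) \<Rightarrow> length u = k \<and> length v = k)"

lemma lenk_simp[simp]: "lenk k (V, E, u, v) \<longleftrightarrow> length u = k \<and> length v = k"
  by (simp add: lenk_def)

definition filtE :: "(nat set \<Rightarrow> bool) \<Rightarrow> bgraph \<Rightarrow> bgraph" where
  "filtE pr F = (case F of (V, E, u, v) \<Rightarrow> (V, {e \<in> E. pr e}, u, v))"

lemma filtE_simp[simp]: "filtE pr (V, E, u, v) = (V, {e \<in> E. pr e}, u, v)"
  by (simp add: filtE_def)

lemma step_cases:
  assumes "bminor_step (V, E, u, v) G"
  shows "(\<exists>e\<in>E. G = (V, E - {e}, u, v))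
       \<or> (\<exists>x\<in>V. x \<notin> set u \<and> x \<notin> set v \<and> G = (V - {x}, {e \<in> E. x \<notin> e}, u, v))
       \<or> (\<exists>a b. {a, b} \<in> E \<and> a \<noteq> b \<and> G = bg_map (rn b a) (V, E - {{a, b}}, u, v))"
  using assms by (cases rule: bminor_step.cases) blast+

lemma wfg_step: assumes st: "bminor_step F G" and w: "wfg F" shows "wfg G"
proof -
  obtain V E u v where F: "F = (V, E, u, v)" by (cases F rule: prod_cases4) auto
  have fin: "finite V" and sub: "\<And>e. e \<in> E \<Longrightarrow> e \<subseteq> V \<and> (\<exists>x y. e = {x, y})"
    and lab: "set u \<subseteq> V" "set v \<subseteq> V" using w F by (auto simp: wfg_simp)
  from step_cases[OF st[unfolded F]] show ?thesis
  proof (elim disjE exE bexE conjE)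
    fix e assume "G = (V, E - {e}, u, v)" then show ?thesis using fin sub lab by (simp add: wfg_simp)
  next
    fix x assume "x \<notin> set u" "x \<notin> set v" "G = (V - {x}, {e \<in> E. x \<notin> e}, u, v)"
    moreover have "\<forall>e\<in>{e \<in> E. x \<notin> e}. e \<subseteq> V - {x} \<and> (\<exists>x y. e = {x, y})" using sub by blast
    ultimately show ?thesis using fin lab by (simp add: wfg_simp subset_Diff_insert)
  next
    fix a b assume "G = bg_map (rn b a) (V, E - {{a, b}}, u, v)"
    moreover have "wfg (V, E - {{a, b}}, u, v)" using fin sub lab by (simp add: wfg_simp)
    ultimately show ?thesis using wfg_bg_map by metis
  qed
qed

lemma lenk_step: assumes st: "bminor_step F G" and l: "lenk k F" shows "lenk k G"
proof -
  obtain V E u v where F: "F = (V, E, u, v)" by (cases F rule: prod_cases4) auto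
  from step_cases[OF st[unfolded F]] show ?thesis using l F by (elim disjE exE bexE conjE) simp_all
qed

lemma wfg_minor: "bminor F G \<Longrightarrow> wfg F \<Longrightarrow> wfg G"
  unfolding bminor_def
proof (induction rule: rtranclp_induct)
  case (step y z) then show ?case using wfg_step[of y z] by blast
qed simp

lemma lenk_minor: "bminor F G \<Longrightarrow> lenk k F \<Longrightarrow> lenk k G"
  unfolding bminor_def
proof (induction rule: rtranclp_induct)
  case (step y z) then show ?case using lenk_step[of y z] by blast
qed simp

lemma bminor_refl: "bminor F F" by (simp add: bminor_def)
lemma bminor_trans: "bminor F G \<Longrightarrow> bminor G H \<Longrightarrow> bminor F H"
  unfolding bminor_def by (rule rtranclp_trans)
lemma bminor_step1: "bminor_step F G \<Longrightarrow> bminor F G"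
  unfolding bminor_def by (rule r_into_rtranclp)

lemma del_edges: "finite D \<Longrightarrow> D \<subseteq> E \<Longrightarrow> bminor (V, E, u, v) (V, E - D, u, v)"
proof (induction D rule: finite_induct)
  case empty then show ?case by (simp add: bminor_refl)
next
  case (insert x D)
  have "bminor_step (V, E - D, u, v) (V, E - D - {x}, u, v)"
    using insert by (intro edel) auto
  moreover have eq: "E - D - {x} = E - insert x D" by auto
  moreover have "bminor (V, E, u, v) (V, E - D, u, v)" using insert by simp
  ultimately show ?case using bminor_trans[OF _ bminor_step1] by simp
qed

lemma finite_edges: "wfg (V, E, u, v) \<Longrightarrow> finite E"
proof -
  assume w: "wfg (V, E, u, v)"
  then have "E \<subseteq> Pow V" "finite V" by (auto simp: wfg_simp)
  then show "finite E" by (meson finite_Pow_iff finite_subset)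
qed

lemma minor_filtE: assumes "wfg F" shows "bminor F (filtE pr F)"
proof -
  obtain V E u v where F: "F = (V, E, u, v)" by (cases F rule: prod_cases4) auto
  have "finite E" using assms F finite_edges by simp
  then have "bminor (V, E, u, v) (V, E - {e \<in> E. \<not> pr e}, u, v)" by (intro del_edges) auto
  moreover have "E - {e \<in> E. \<not> pr e} = {e \<in> E. pr e}" by auto
  ultimately show ?thesis using F by simp
qed

lemma wfg_filtE: "wfg F \<Longrightarrow> wfg (filtE pr F)"
  by (cases F) (simp add: wfg_simp)

lemma lenk_filtE: "lenk k F \<Longrightarrow> lenk k (filtE pr F)"
  by (cases F rule: prod_cases4) auto

lemma inj_image_edges:
  assumes "inj_on f V" "e1 \<subseteq> V" "e2 \<subseteq> V" "f ` e1 = f ` e2" shows "e1 = e2"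
  using assms by (metis inj_on_image_eq_iff)

lemma iso_map: "inj_on f (fst H) \<Longrightarrow> bg_iso H (bg_map f H)"
  unfolding bg_iso_alt by (rule exI[of _ f]) simp

lemma pullback_step:
  assumes w: "wfg F" and iso: "bg_iso F G" and st: "bminor_step G G'"
  shows "\<exists>F'. bminor_step F F' \<and> bg_iso F' G'"
proof -
  obtain V E u v where F: "F = (V, E, u, v)" by (cases F rule: prod_cases4) auto
  obtain f where inj: "inj_on f V" and G: "G = bg_map f F" using iso F by (auto simp: bg_iso_alt)
  have sub: "\<And>e. e \<in> E \<Longrightarrow> e \<subseteq> V" using w F by (auto simp: wfg_simp)
  have Gs: "G = (f ` V, (\<lambda>e. f ` e) ` E, map f u, map f v)" using G F by simp
  have imdiff: "(\<lambda>e. f ` e) ` (E - {e0}) = (\<lambda>e. f ` e) ` E - {f ` e0}" if "e0 \<in> E" for e0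
  proof -
    have "f ` e \<noteq> f ` e0" if "e \<in> E" "e \<noteq> e0" for e
      using inj_image_edges[OF inj sub[OF that(1)] sub[OF \<open>e0 \<in> E\<close>]] that by blast
    then show ?thesis using that by auto
  qed
  from step_cases[OF st[unfolded Gs]] show ?thesis
  proof (elim disjE exE bexE conjE)
    fix e assume e: "e \<in> (\<lambda>e. f ` e) ` E" and G': "G' = (f ` V, (\<lambda>e. f ` e) ` E - {e}, map f u, map f v)"
    obtain e0 where e0: "e0 \<in> E" "e = f ` e0" using e by auto
    have "bminor_step F (V, E - {e0}, u, v)" using F e0 by (simp add: edel)
    moreover have "G' = bg_map f (V, E - {e0}, u, v)" using G' e0 imdiff by simp
    moreover have "bg_iso (V, E - {e0}, u, v) (bg_map f (V, E - {e0}, u, v))" using inj by (intro iso_map) simp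
    ultimately show ?thesis by metis
  next
    fix x assume x: "x \<in> f ` V" "x \<notin> set (map f u)" "x \<notin> set (map f v)"
      and G': "G' = (f ` V - {x}, {e \<in> (\<lambda>e. f ` e) ` E. x \<notin> e}, map f u, map f v)"
    obtain x0 where x0: "x0 \<in> V" "x = f x0" using x by auto
    have "x0 \<notin> set u" "x0 \<notin> set v" using x x0 by auto
    then have "bminor_step F (V - {x0}, {e \<in> E. x0 \<notin> e}, u, v)" using F x0 by (simp add: vdel)
    moreover have i1: "f ` (V - {x0}) = f ` V - {x}" using inj x0 by (simp add: inj_on_image_set_diff)
    moreover have i2: "(\<lambda>e. f ` e) ` {e \<in> E. x0 \<notin> e} = {e \<in> (\<lambda>e. f ` e) ` E. x \<notin> e}"
    proof -
      have "x \<notin> f ` e \<longleftrightarrow> x0 \<notin> e" if "e \<in> E" for e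
        using sub[OF that] x0 inj by (auto simp: inj_on_def)
      then show ?thesis by auto
    qed
    moreover have "inj_on f (V - {x0})" using inj by (auto simp: inj_on_def)
    then have "bg_iso (V - {x0}, {e \<in> E. x0 \<notin> e}, u, v) (bg_map f (V - {x0}, {e \<in> E. x0 \<notin> e}, u, v))"
      by (intro iso_map) simp
    moreover have "G' = bg_map f (V - {x0}, {e \<in> E. x0 \<notin> e}, u, v)" using G' i1 i2 by simp
    ultimately show ?thesis by metis
  next
    fix a b assume ab: "{a, b} \<in> (\<lambda>e. f ` e) ` E" "a \<noteq> b"
      and G': "G' = bg_map (rn b a) (f ` V, (\<lambda>e. f ` e) ` E - {{a, b}}, map f u, map f v)"
    obtain e0 where e0: "e0 \<in> E" "{a, b} = f ` e0" using ab by auto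
    obtain c d where cd: "e0 = {c, d}" using w F e0 by (auto simp: wfg_simp)
    have "{a, b} = {f c, f d}" using e0 cd by simp
    then have "(a = f c \<and> b = f d) \<or> (a = f d \<and> b = f c)" by (simp add: doubleton_eq_iff)
    then obtain a0 b0 where ab0: "e0 = {a0, b0}" "f a0 = a" "f b0 = b"
      using cd by (metis insert_commute)
    have ne: "a0 \<noteq> b0" using ab0 ab(2) by auto
    have inV: "a0 \<in> V" "b0 \<in> V" using sub[OF e0(1)] ab0 by auto
    let ?H = "(V, E - {{a0, b0}}, u, v)"
    have st': "bminor_step F (bg_map (rn b0 a0) ?H)" unfolding F using e0 ab0 ne by (intro contr) simp_all
    have wH: "wfg ?H" using w F by (auto simp: wfg_simp)
    have eqE: "(\<lambda>e. f ` e) ` (E - {{a0, b0}}) = (\<lambda>e. f ` e) ` E - {{a, b}}"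
      using imdiff[OF e0(1)] e0(2) ab0(1) by simp
    have "G' = bg_map (rn b a) (bg_map f ?H)" unfolding G' by (simp only: bg_map_simp eqE)
    also have "\<dots> = bg_map (rn b a \<circ> f) ?H" by (rule bg_map_comp)
    finally have G'': "G' = bg_map (rn b a \<circ> f) ?H" .
    have "bg_iso (bg_map (rn b0 a0) ?H) (bg_map (rn b a \<circ> f) ?H)"
    proof (rule kern_iso[OF wH])
      fix x y assume xy: "x \<in> V" "y \<in> V"
      have fx: "f x = a \<longleftrightarrow> x = a0" "f x = b \<longleftrightarrow> x = b0" "f y = a \<longleftrightarrow> y = a0" "f y = b \<longleftrightarrow> y = b0"
        using inj_on_eq_iff[OF inj xy(1) inV(1)] inj_on_eq_iff[OF inj xy(1) inV(2)]
          inj_on_eq_iff[OF inj xy(2) inV(1)] inj_on_eq_iff[OF inj xy(2) inV(2)] ab0 by simp_all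
      have fxy: "f x = f y \<longleftrightarrow> x = y" using inj_on_eq_iff[OF inj xy] .
      show "rn b0 a0 x = rn b0 a0 y \<longleftrightarrow> (rn b a \<circ> f) x = (rn b a \<circ> f) y"
        using fx fxy ne ab(2) by auto
    qed
    then show ?thesis using st' G'' by blast
  qed
qed

lemma pullback:
  assumes "bminor G G'" "wfg F" "bg_iso F G"
  shows "\<exists>F'. bminor F F' \<and> bg_iso F' G'"
  using assms(1) unfolding bminor_def
proof (induction rule: rtranclp_induct)
  case base then show ?case using assms(3) by blast
next
  case (step y z)
  then obtain F1 where F1: "bminor_step\<^sup>*\<^sup>* F F1" "bg_iso F1 y" by blast
  have "wfg F1" using F1(1) assms(2) wfg_minor bminor_def by metis
  then obtain F2 where "bminor_step F1 F2" "bg_iso F2 z" using pullback_step F1(2) step(2) by blast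
  then show ?case using F1(1) by (meson rtranclp.rtrancl_into_rtrancl)
qed



definition DUs :: "bgraph \<Rightarrow> bgraph \<Rightarrow> bgraph" where
  "DUs F F' = (case F of (V, E, u, v) \<Rightarrow> case F' of (V', E', u', v') \<Rightarrow>
     ((\<lambda>x. 2 * x) ` V \<union> (\<lambda>x. 2 * x + 1) ` V',
      (\<lambda>e. (\<lambda>x. 2 * x) ` e) ` E \<union> (\<lambda>e. (\<lambda>x. 2 * x + 1) ` e) ` E',
      map (\<lambda>x. 2 * x) u, map (\<lambda>x. 2 * x + 1) v'))"

definition Rs :: "bgraph \<Rightarrow> bgraph \<Rightarrow> (nat \<times> nat) set" where
  "Rs F F' = (case F of (V, E, u, v) \<Rightarrow> case F' of (V', E', u', v') \<Rightarrow>
     set (zip (map (\<lambda>x. 2 * x) v) (map (\<lambda>x. 2 * x + 1) u')))"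

definition DUp :: "bgraph \<Rightarrow> bgraph \<Rightarrow> bgraph" where
  "DUp F F' = (case F of (V, E, u, v) \<Rightarrow> case F' of (V', E', u', v') \<Rightarrow>
     ((\<lambda>x. 2 * x) ` V \<union> (\<lambda>x. 2 * x + 1) ` V',
      (\<lambda>e. (\<lambda>x. 2 * x) ` e) ` E \<union> (\<lambda>e. (\<lambda>x. 2 * x + 1) ` e) ` E',
      map (\<lambda>x. 2 * x) u, map (\<lambda>x. 2 * x) v))"

definition Rp :: "bgraph \<Rightarrow> bgraph \<Rightarrow> (nat \<times> nat) set" where
  "Rp F F' = (case F of (V, E, u, v) \<Rightarrow> case F' of (V', E', u', v') \<Rightarrow>
     set (zip (map (\<lambda>x. 2 * x) u) (map (\<lambda>x. 2 * x + 1) u'))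
     \<union> set (zip (map (\<lambda>x. 2 * x) v) (map (\<lambda>x. 2 * x + 1) v')))"

definition vdelg :: "nat \<Rightarrow> bgraph \<Rightarrow> bgraph" where
  "vdelg x F = (case F of (V, E, u, v) \<Rightarrow> (V - {x}, {e \<in> E. x \<notin> e}, u, v))"

lemma vdelg_simp[simp]: "vdelg x (V, E, u, v) = (V - {x}, {e \<in> E. x \<notin> e}, u, v)"
  by (simp add: vdelg_def)

lemma DUs_simp: "DUs (V, E, u, v) (V', E', u', v') =
     ((\<lambda>x. 2 * x) ` V \<union> (\<lambda>x. 2 * x + 1) ` V',
      (\<lambda>e. (\<lambda>x. 2 * x) ` e) ` E \<union> (\<lambda>e. (\<lambda>x. 2 * x + 1) ` e) ` E',
      map (\<lambda>x. 2 * x) u, map (\<lambda>x. 2 * x + 1) v')"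
  by (simp add: DUs_def)

lemma DUp_simp: "DUp (V, E, u, v) (V', E', u', v') =
     ((\<lambda>x. 2 * x) ` V \<union> (\<lambda>x. 2 * x + 1) ` V',
      (\<lambda>e. (\<lambda>x. 2 * x) ` e) ` E \<union> (\<lambda>e. (\<lambda>x. 2 * x + 1) ` e) ` E',
      map (\<lambda>x. 2 * x) u, map (\<lambda>x. 2 * x) v)"
  by (simp add: DUp_def)

lemma Rs_simp: "Rs (V, E, u, v) (V', E', u', v') = set (zip (map (\<lambda>x. 2 * x) v) (map (\<lambda>x. 2 * x + 1) u'))"
  by (simp add: Rs_def)

lemma Rp_simp: "Rp (V, E, u, v) (V', E', u', v') =
     set (zip (map (\<lambda>x. 2 * x) u) (map (\<lambda>x. 2 * x + 1) u'))
     \<union> set (zip (map (\<lambda>x. 2 * x) v) (map (\<lambda>x. 2 * x + 1) v'))"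
  by (simp add: Rp_def)

lemma series_eq: "bg_series F F' = bg_map (quot_map (Rs F F')) (DUs F F')"
proof -
  obtain V E u v where F: "F = (V, E, u, v)" by (cases F rule: prod_cases4) auto
  obtain V' E' u' v' where F': "F' = (V', E', u', v')" by (cases F' rule: prod_cases4) auto
  show ?thesis unfolding F F' bg_series_def Let_def DUs_simp Rs_simp bg_map_simp
    by (simp add: image_Un image_comp comp_def)
qed

lemma parallel_eq: "bg_parallel F F' = bg_map (quot_map (Rp F F')) (DUp F F')"
proof -
  obtain V E u v where F: "F = (V, E, u, v)" by (cases F rule: prod_cases4) auto
  obtain V' E' u' v' where F': "F' = (V', E', u', v')" by (cases F' rule: prod_cases4) auto
  show ?thesis unfolding F F' bg_parallel_def Let_def DUp_simp Rp_simp bg_map_simp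
    by (simp add: image_Un image_comp comp_def)
qed

lemma mapR_zip: "mapR g (set (zip xs ys)) = set (zip (map g xs) (map g ys))"
  by (simp only: mapR_def zip_map_map set_map)

lemma mapR_Un: "mapR g (X \<union> Y) = mapR g X \<union> mapR g Y"
  by (auto simp: mapR_def)

lemma image2_comp: "(\<lambda>e. g ` e) ` ((\<lambda>e. f ` e) ` E) = (\<lambda>e. (g \<circ> f) ` e) ` E"
  by (simp add: image_comp comp_def)

lemma DU_map:
  assumes g1: "\<And>x. g (2 * x) = 2 * s x" and g2: "\<And>x. g (2 * x + 1) = 2 * t x + 1"
  shows "bg_map g (DUs A B) = DUs (bg_map s A) (bg_map t B)"
    "mapR g (Rs A B) = Rs (bg_map s A) (bg_map t B)"
    "bg_map g (DUp A B) = DUp (bg_map s A) (bg_map t B)"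
    "mapR g (Rp A B) = Rp (bg_map s A) (bg_map t B)"
proof -
  obtain V E u v where A: "A = (V, E, u, v)" by (cases A rule: prod_cases4) auto
  obtain V' E' u' v' where B: "B = (V', E', u', v')" by (cases B rule: prod_cases4) auto
  have c1: "g \<circ> (\<lambda>x. 2 * x) = (\<lambda>x. 2 * x) \<circ> s" and c2: "g \<circ> (\<lambda>x. 2 * x + 1) = (\<lambda>x. 2 * x + 1) \<circ> t"
    using g1 g2 by (auto simp: fun_eq_iff)
  have i1: "g ` ((\<lambda>x. 2 * x) ` X) = (\<lambda>x. 2 * x) ` (s ` X)" for X
    by (simp only: image_comp c1)
  have i2: "g ` ((\<lambda>x. 2 * x + 1) ` X) = (\<lambda>x. 2 * x + 1) ` (t ` X)" for X
    by (simp only: image_comp c2)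
  have e1: "(\<lambda>e. g ` e) ` ((\<lambda>e. (\<lambda>x. 2 * x) ` e) ` X) = (\<lambda>e. (\<lambda>x. 2 * x) ` e) ` ((\<lambda>e. s ` e) ` X)" for X
    by (simp only: image2_comp c1)
  have e2: "(\<lambda>e. g ` e) ` ((\<lambda>e. (\<lambda>x. 2 * x + 1) ` e) ` X) = (\<lambda>e. (\<lambda>x. 2 * x + 1) ` e) ` ((\<lambda>e. t ` e) ` X)" for X
    by (simp only: image2_comp c2)
  have m1: "map g (map (\<lambda>x. 2 * x) l) = map (\<lambda>x. 2 * x) (map s l)" for l
    by (simp only: map_map c1)
  have m2: "map g (map (\<lambda>x. 2 * x + 1) l) = map (\<lambda>x. 2 * x + 1) (map t l)" for l
    by (simp only: map_map c2)
  show "bg_map g (DUs A B) = DUs (bg_map s A) (bg_map t B)"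
    unfolding A B DUs_simp bg_map_simp image_Un i1 i2 e1 e2 m1 m2 ..
  show "mapR g (Rs A B) = Rs (bg_map s A) (bg_map t B)"
    unfolding A B Rs_simp bg_map_simp mapR_zip m1 m2 ..
  show "bg_map g (DUp A B) = DUp (bg_map s A) (bg_map t B)"
    unfolding A B DUp_simp bg_map_simp image_Un i1 i2 e1 e2 m1 m2 ..
  show "mapR g (Rp A B) = Rp (bg_map s A) (bg_map t B)"
    unfolding A B Rp_simp bg_map_simp mapR_Un mapR_zip m1 m2 ..
qed



lemma odd_ne_even[simp]: "Suc (2 * x) \<noteq> 2 * y" "2 * y \<noteq> Suc (2 * x)"
  by presburger+

lemma edel_base:
  "(h ` V, (\<lambda>e. h ` e) ` E - {e}, map h l1, map h l2) = bg_map h (filtE (\<lambda>e'. h ` e' \<noteq> e) (V, E, l1, l2))"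
proof -
  have "(\<lambda>e. h ` e) ` {e' \<in> E. h ` e' \<noteq> e} = (\<lambda>e. h ` e) ` E - {e}" by blast
  then show ?thesis by (simp only: bg_map_simp filtE_simp)
qed

lemma vdel_base:
  assumes w: "wfg (V, E, l1, l2)" and y0: "y0 \<in> V" and sing: "\<And>z. z \<in> V \<Longrightarrow> h z = h y0 \<Longrightarrow> z = y0"
  shows "(h ` V - {h y0}, {e \<in> (\<lambda>e. h ` e) ` E. h y0 \<notin> e}, map h l1, map h l2) = bg_map h (vdelg y0 (V, E, l1, l2))"
proof -
  have 1: "h ` (V - {y0}) = h ` V - {h y0}"
  proof (intro equalityI subsetI)
    fix y assume "y \<in> h ` (V - {y0})"
    then obtain z where z: "z \<in> V" "z \<noteq> y0" "y = h z" by blast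
    then have "h z \<noteq> h y0" using sing by metis
    then show "y \<in> h ` V - {h y0}" using z by auto
  next
    fix y assume "y \<in> h ` V - {h y0}"
    then show "y \<in> h ` (V - {y0})" by blast
  qed
  have 2: "(\<lambda>e. h ` e) ` {e \<in> E. y0 \<notin> e} = {e \<in> (\<lambda>e. h ` e) ` E. h y0 \<notin> e}"
  proof -
    have iff: "h y0 \<notin> h ` e \<longleftrightarrow> y0 \<notin> e" if "e \<in> E" for e
    proof
      assume "h y0 \<notin> h ` e" then show "y0 \<notin> e" by blast
    next
      assume ne: "y0 \<notin> e"
      have "e \<subseteq> V" using w that by (simp add: wfg_simp)
      show "h y0 \<notin> h ` e"
      proof
        assume "h y0 \<in> h ` e"
        then obtain z where "z \<in> e" "h y0 = h z" by blast
        then show False using sing \<open>e \<subseteq> V\<close> ne by (metis subsetD)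
      qed
    qed
    show ?thesis
    proof (intro equalityI subsetI)
      fix e assume "e \<in> (\<lambda>e. h ` e) ` {e \<in> E. y0 \<notin> e}"
      then obtain e1 where "e1 \<in> E" "y0 \<notin> e1" "e = h ` e1" by blast
      then show "e \<in> {e \<in> (\<lambda>e. h ` e) ` E. h y0 \<notin> e}" using iff by blast
    next
      fix e assume "e \<in> {e \<in> (\<lambda>e. h ` e) ` E. h y0 \<notin> e}"
      then obtain e1 where "e1 \<in> E" "h y0 \<notin> h ` e1" "e = h ` e1" by blast
      then show "e \<in> (\<lambda>e. h ` e) ` {e \<in> E. y0 \<notin> e}" using iff by blast
    qed
  qed
  show ?thesis by (simp only: bg_map_simp vdelg_simp 1 2)
qed

lemma contr_base:
  "bg_map (rn b a) (h ` V, (\<lambda>e. h ` e) ` E - {{a, b}}, map h l1, map h l2)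
     = bg_map (rn b a \<circ> h) (filtE (\<lambda>e'. h ` e' \<noteq> {a, b}) (V, E, l1, l2))"
  by (simp only: edel_base bg_map_comp)

lemma glue_base:
  assumes x: "x \<notin> set (map h l1)" "x \<notin> set (map h l2)" and z: "z \<in> h ` V" "z \<noteq> x"
  shows "(h ` V - {x}, {e \<in> (\<lambda>e. h ` e) ` E. x \<notin> e}, map h l1, map h l2)
     = bg_map (rn x z \<circ> h) (filtE (\<lambda>e'. x \<notin> h ` e') (V, E, l1, l2))"
proof -
  have "(rn x z \<circ> h) ` V = h ` V - {x}"
  proof
    show "(rn x z \<circ> h) ` V \<subseteq> h ` V - {x}"
    proof
      fix y assume "y \<in> (rn x z \<circ> h) ` V"
      then obtain y0 where y0: "y0 \<in> V" "y = rn x z (h y0)" by auto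
      show "y \<in> h ` V - {x}"
      proof (cases "h y0 = x")
        case True then show ?thesis using y0 z by auto
      next
        case False then show ?thesis using y0 by auto
      qed
    qed
    show "h ` V - {x} \<subseteq> (rn x z \<circ> h) ` V"
    proof
      fix y assume "y \<in> h ` V - {x}"
      then obtain y0 where "y0 \<in> V" "y = h y0" "h y0 \<noteq> x" by auto
      then show "y \<in> (rn x z \<circ> h) ` V" by (auto intro!: image_eqI[of _ _ y0])
    qed
  qed
  moreover have "(\<lambda>e. (rn x z \<circ> h) ` e) ` {e' \<in> E. x \<notin> h ` e'} = {e \<in> (\<lambda>e. h ` e) ` E. x \<notin> e}"
  proof -
    have "(rn x z \<circ> h) ` e' = h ` e'" if "x \<notin> h ` e'" for e'
      using that by (force simp: image_comp[symmetric])
    then show ?thesis by (auto simp: image_iff)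
  qed
  moreover have "map (rn x z \<circ> h) l1 = map h l1" "map (rn x z \<circ> h) l2 = map h l2"
    using x by (auto intro!: map_cong)
  ultimately show ?thesis by (simp only: bg_map_simp filtE_simp)
qed

lemma filt_img2: "(\<lambda>e. f1 ` e) ` {e \<in> E. pr (f1 ` e)} \<union> (\<lambda>e. f2 ` e) ` {e \<in> E'. pr (f2 ` e)}
   = {e \<in> (\<lambda>e. f1 ` e) ` E \<union> (\<lambda>e. f2 ` e) ` E'. pr e}"
  by blast

lemma DUs_filt: "DUs (filtE (\<lambda>e. pr ((\<lambda>x. 2 * x) ` e)) A) (filtE (\<lambda>e. pr ((\<lambda>x. 2 * x + 1) ` e)) B)
   = filtE pr (DUs A B)"
  by (cases A rule: prod_cases4, cases B rule: prod_cases4) (simp only: DUs_simp filtE_simp filt_img2)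

lemma DUp_filt: "DUp (filtE (\<lambda>e. pr ((\<lambda>x. 2 * x) ` e)) A) (filtE (\<lambda>e. pr ((\<lambda>x. 2 * x + 1) ` e)) B)
   = filtE pr (DUp A B)"
  by (cases A rule: prod_cases4, cases B rule: prod_cases4) (simp only: DUp_simp filtE_simp filt_img2)

lemma R_filt: "Rs (filtE p1 A) (filtE p2 B) = Rs A B" "Rp (filtE p1 A) (filtE p2 B) = Rp A B"
  by (cases A rule: prod_cases4, cases B rule: prod_cases4, simp add: Rs_simp Rp_simp)+

lemma R_vdel: "Rs (vdelg a0 A) B = Rs A B" "Rs A (vdelg b0 B) = Rs A B"
   "Rp (vdelg a0 A) B = Rp A B" "Rp A (vdelg b0 B) = Rp A B"
  by (cases A rule: prod_cases4, cases B rule: prod_cases4, simp add: Rs_simp Rp_simp)+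

lemma filt_img: "{e \<in> (\<lambda>e. g ` e) ` E. pr e} = (\<lambda>e. g ` e) ` {e \<in> E. pr (g ` e)}"
  by blast

lemma filt_Un: "{e \<in> X \<union> Y. pr e} = {e \<in> X. pr e} \<union> {e \<in> Y. pr e}"
  by blast

lemma DU_vdel1: "vdelg (2 * a0) (DUs A B) = DUs (vdelg a0 A) B" "vdelg (2 * a0) (DUp A B) = DUp (vdelg a0 A) B"
proof -
  obtain V E u v where A: "A = (V, E, u, v)" by (cases A rule: prod_cases4) auto
  obtain V' E' u' v' where B: "B = (V', E', u', v')" by (cases B rule: prod_cases4) auto
  have im: "\<And>X. 2 * a0 \<in> (\<lambda>x. 2 * x) ` X \<longleftrightarrow> a0 \<in> X" by auto
  have 1: "(\<lambda>x. 2 * x) ` V \<union> (\<lambda>x. 2 * x + 1) ` V' - {2 * a0} = (\<lambda>x. 2 * x) ` (V - {a0}) \<union> (\<lambda>x. 2 * x + 1) ` V'"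
    by auto
  have 2: "{e \<in> (\<lambda>e. (\<lambda>x. 2 * x) ` e) ` E \<union> (\<lambda>e. (\<lambda>x. 2 * x + 1) ` e) ` E'. 2 * a0 \<notin> e}
     = (\<lambda>e. (\<lambda>x. 2 * x) ` e) ` {e \<in> E. a0 \<notin> e} \<union> (\<lambda>e. (\<lambda>x. 2 * x + 1) ` e) ` E'"
  proof -
    have b: "{e \<in> (\<lambda>e. (\<lambda>x. 2 * x + 1) ` e) ` E'. 2 * a0 \<notin> e} = (\<lambda>e. (\<lambda>x. 2 * x + 1) ` e) ` E'"
      by auto
    show ?thesis by (simp only: filt_Un b filt_img im)
  qed
  show "vdelg (2 * a0) (DUs A B) = DUs (vdelg a0 A) B" unfolding A B DUs_simp vdelg_simp 1 2 ..
  show "vdelg (2 * a0) (DUp A B) = DUp (vdelg a0 A) B" unfolding A B DUp_simp vdelg_simp 1 2 ..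
qed

lemma DU_vdel2: "vdelg (2 * b0 + 1) (DUs A B) = DUs A (vdelg b0 B)" "vdelg (2 * b0 + 1) (DUp A B) = DUp A (vdelg b0 B)"
proof -
  obtain V E u v where A: "A = (V, E, u, v)" by (cases A rule: prod_cases4) auto
  obtain V' E' u' v' where B: "B = (V', E', u', v')" by (cases B rule: prod_cases4) auto
  have im: "\<And>X. 2 * b0 + 1 \<in> (\<lambda>x. 2 * x + 1) ` X \<longleftrightarrow> b0 \<in> X" by auto
  have 1: "(\<lambda>x. 2 * x) ` V \<union> (\<lambda>x. 2 * x + 1) ` V' - {2 * b0 + 1} = (\<lambda>x. 2 * x) ` V \<union> (\<lambda>x. 2 * x + 1) ` (V' - {b0})"
    by auto
  have 2: "{e \<in> (\<lambda>e. (\<lambda>x. 2 * x) ` e) ` E \<union> (\<lambda>e. (\<lambda>x. 2 * x + 1) ` e) ` E'. 2 * b0 + 1 \<notin> e}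
     = (\<lambda>e. (\<lambda>x. 2 * x) ` e) ` E \<union> (\<lambda>e. (\<lambda>x. 2 * x + 1) ` e) ` {e \<in> E'. b0 \<notin> e}"
  proof -
    have b: "{e \<in> (\<lambda>e. (\<lambda>x. 2 * x) ` e) ` E. 2 * b0 + 1 \<notin> e} = (\<lambda>e. (\<lambda>x. 2 * x) ` e) ` E"
      by auto
    show ?thesis by (simp only: filt_Un b filt_img im)
  qed
  show "vdelg (2 * b0 + 1) (DUs A B) = DUs A (vdelg b0 B)" unfolding A B DUs_simp vdelg_simp 1 2 ..
  show "vdelg (2 * b0 + 1) (DUp A B) = DUp A (vdelg b0 B)" unfolding A B DUp_simp vdelg_simp 1 2 ..
qed

lemma wfg_DU: "wfg A \<Longrightarrow> wfg B \<Longrightarrow> wfg (DUs A B) \<and> wfg (DUp A B)"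
proof -
  assume wA: "wfg A" and wB: "wfg B"
  obtain V E u v where A: "A = (V, E, u, v)" by (cases A rule: prod_cases4) auto
  obtain V' E' u' v' where B: "B = (V', E', u', v')" by (cases B rule: prod_cases4) auto
  have "\<forall>e\<in>(\<lambda>e. (\<lambda>x. 2 * x) ` e) ` E \<union> (\<lambda>e. (\<lambda>x. 2 * x + 1) ` e) ` E'.
      e \<subseteq> (\<lambda>x. 2 * x) ` V \<union> (\<lambda>x. 2 * x + 1) ` V' \<and> (\<exists>x y. e = {x, y})"
  proof
    fix e assume "e \<in> (\<lambda>e. (\<lambda>x. 2 * x) ` e) ` E \<union> (\<lambda>e. (\<lambda>x. 2 * x + 1) ` e) ` E'"
    then show "e \<subseteq> (\<lambda>x. 2 * x) ` V \<union> (\<lambda>x. 2 * x + 1) ` V' \<and> (\<exists>x y. e = {x, y})"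
    proof
      assume "e \<in> (\<lambda>e. (\<lambda>x. 2 * x) ` e) ` E"
      then obtain e1 where "e1 \<in> E" "e = (\<lambda>x. 2 * x) ` e1" by auto
      moreover obtain c d where "e1 = {c, d}" "e1 \<subseteq> V" using wA A \<open>e1 \<in> E\<close> by (auto simp: wfg_simp)
      ultimately show ?thesis by auto
    next
      assume "e \<in> (\<lambda>e. (\<lambda>x. 2 * x + 1) ` e) ` E'"
      then obtain e1 where "e1 \<in> E'" "e = (\<lambda>x. 2 * x + 1) ` e1" by auto
      moreover obtain c d where "e1 = {c, d}" "e1 \<subseteq> V'" using wB B \<open>e1 \<in> E'\<close> by (auto simp: wfg_simp)
      ultimately show ?thesis by auto
    qed
  qed
  then show ?thesis using wA wB A B by (auto simp: wfg_simp DUs_simp DUp_simp)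
qed



definition alllab :: "bgraph \<Rightarrow> bool" where
  "alllab F = (case F of (V, E, u, v) \<Rightarrow> V \<subseteq> set u \<union> set v)"

lemma alllab_simp[simp]: "alllab (V, E, u, v) \<longleftrightarrow> V \<subseteq> set u \<union> set v"
  by (simp add: alllab_def)

definition EC :: "nat \<Rightarrow> nat set set" where
  "EC k = {{i, i + 1} | i. i + 1 < k} \<union> {{i, i + 1} | i. k \<le> i \<and> i + 1 < 2 * k}
              \<union> (if 1 \<le> k then {{0, k}, {k - 1, 2 * k - 1}} else {})"

lemma bgC_eq: "bgC k = ({0..<2 * k}, EC k, [0..<k], [k..<2 * k])"
  by (simp add: bgC_def EC_def)

lemma EC_cases:
  assumes "e \<in> EC k"
  obtains i where "e = {i, i + 1}" "i + 1 < 2 * k" | "e = {0, k}" "1 \<le> k" | "e = {k - 1, 2 * k - 1}" "1 \<le> k"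
proof -
  from assms consider (a) "e \<in> {{i, i + 1} | i. i + 1 < k}" | (b) "e \<in> {{i, i + 1} | i. k \<le> i \<and> i + 1 < 2 * k}"
    | (c) "1 \<le> k" "e \<in> {{0, k}, {k - 1, 2 * k - 1}}"
    unfolding EC_def by (auto split: if_splits)
  then show ?thesis
  proof cases
    case a then obtain i where "e = {i, i + 1}" "i + 1 < k" by blast
    then show ?thesis using that(1)[of i] by simp
  next
    case b then obtain i where "e = {i, i + 1}" "i + 1 < 2 * k" by blast
    then show ?thesis using that(1)[of i] by simp
  next
    case c then show ?thesis using that(2,3) by blast
  qed
qed

lemma EC_sub: "e \<in> EC k \<Longrightarrow> e \<subseteq> {0..<2 * k} \<and> (\<exists>x y. e = {x, y})"
  by (erule EC_cases) auto

lemma wfg_bgC: "wfg (bgC k)"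
  unfolding bgC_eq wfg_simp using EC_sub by auto

lemma lenk_bgC: "lenk k (bgC k)"
  unfolding bgC_eq by simp

lemma alllab_bgC: "alllab (bgC k)"
  unfolding bgC_eq alllab_simp by (auto simp: set_upt)

lemma wfg_bgM: "wfg (bgM k)"
proof -
  have "\<forall>e\<in>{{i, i + k} | i. i < k}. e \<subseteq> {0..<2 * k} \<and> (\<exists>x y. e = {x, y})" by auto
  then show ?thesis unfolding bgM_def wfg_simp by auto
qed

lemma lenk_bgM: "lenk k (bgM k)"
  unfolding bgM_def by simp

definition Xg :: "nat \<Rightarrow> nat \<Rightarrow> nat \<Rightarrow> bgraph" where
  "Xg k p p' = bg_map (rn p' p) ({0..<2 * k}, {}, [0..<k], [k..<2 * k])"

lemma Xg_QP:
  assumes "{p, p'} \<in> EC k" "p \<noteq> p'"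
  shows "Xg k p p' \<in> QP k"
proof -
  have m0: "bminor (bgC k) (filtE (\<lambda>e. e = {p, p'}) (bgC k))" by (rule minor_filtE[OF wfg_bgC])
  have "{e \<in> EC k. e = {p, p'}} = {{p, p'}}" using assms(1) by blast
  then have "filtE (\<lambda>e. e = {p, p'}) (bgC k) = ({0..<2 * k}, {{p, p'}}, [0..<k], [k..<2 * k])"
    unfolding bgC_eq filtE_simp by simp
  then have m1: "bminor (bgC k) ({0..<2 * k}, {{p, p'}}, [0..<k], [k..<2 * k])" using m0 by simp
  have m2: "bminor_step ({0..<2 * k}, {{p, p'}}, [0..<k], [k..<2 * k])
      (bg_map (rn p' p) ({0..<2 * k}, {{p, p'}} - {{p, p'}}, [0..<k], [k..<2 * k]))"
    using assms(2) by (intro contr) simp_all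
  have eq: "bg_map (rn p' p) ({0..<2 * k}, {{p, p'}} - {{p, p'}}, [0..<k], [k..<2 * k]) = Xg k p p'"
    unfolding Xg_def by (simp only: Diff_cancel)
  have mm: "bminor (bgC k) (Xg k p p')" using bminor_trans[OF m1 bminor_step1[OF m2]] unfolding eq .
  have "wfg (Xg k p p')" unfolding Xg_def by (rule wfg_bg_map) (simp add: wfg_simp)
  then have "bg_iso (Xg k p p') (Xg k p p')" by (rule iso_refl)
  then show ?thesis unfolding QP_def mem_Collect_eq using mm by blast
qed

definition wpos :: "bgraph \<Rightarrow> nat \<Rightarrow> nat" where
  "wpos F t = (case F of (V, E, u, v) \<Rightarrow> (u @ v) ! t)"

lemma set_zip_nth: "set (zip xs ys) = {(xs ! i, ys ! i) | i. i < min (length xs) (length ys)}"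
  by (auto simp: set_zip)

lemma XL:
  assumes w: "wfg F" and l: "lenk k F" and p: "p < 2 * k" "p' < 2 * k"
  shows "bg_iso (bg_parallel F (Xg k p p')) (bg_map (rn (wpos F p') (wpos F p)) F)"
proof -
  obtain V E u v where Fd: "F = (V, E, u, v)" by (cases F rule: prod_cases4) auto
  have lu: "length u = k" "length v = k" using l Fd by auto
  have lab: "set u \<subseteq> V" "set v \<subseteq> V" using w Fd by (auto simp: wfg_simp)
  define wt where "wt t = (u @ v) ! t" for t
  have wpos: "wpos F t = wt t" for t by (simp add: wpos_def wt_def Fd)
  define \<mu> where "\<mu> = rn p' p"
  define R where "R = Rp F (Xg k p p')"
  have Xd: "Xg k p p' = (\<mu> ` {0..<2 * k}, {}, map \<mu> [0..<k], map \<mu> [k..<2 * k])"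
    by (simp add: Xg_def \<mu>_def)
  have Rd: "R = set (zip (map (\<lambda>x. 2 * x) u) (map (\<lambda>x. 2 * x + 1) (map \<mu> [0..<k])))
     \<union> set (zip (map (\<lambda>x. 2 * x) v) (map (\<lambda>x. 2 * x + 1) (map \<mu> [k..<2 * k])))"
    unfolding R_def Fd Xd Rp_simp ..
  have K1: "(2 * wt t, 2 * \<mu> t + 1) \<in> R" if "t < 2 * k" for t
  proof (cases "t < k")
    case True
    then show ?thesis unfolding Rd set_zip_nth using lu
      by (auto simp: wt_def nth_append intro!: exI[of _ t])
  next
    case False
    then have "t - k < k" "t = k + (t - k)" using that by auto
    then show ?thesis unfolding Rd set_zip_nth using lu False
      by (auto simp: wt_def nth_append intro!: exI[of _ "t - k"])
  qed
  have K2: "\<exists>t<2 * k. a = 2 * wt t \<and> b = 2 * \<mu> t + 1" if "(a, b) \<in> R" for a b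
  proof -
    from that consider (1) i where "i < k" "a = 2 * u ! i" "b = 2 * \<mu> i + 1"
      | (2) i where "i < k" "a = 2 * v ! i" "b = 2 * \<mu> (k + i) + 1"
      unfolding Rd set_zip_nth using lu by auto
    then show ?thesis
    proof cases
      case 1 then show ?thesis using lu by (intro exI[of _ i]) (auto simp: wt_def nth_append)
    next
      case 2 then show ?thesis using lu by (intro exI[of _ "k + i"]) (auto simp: wt_def nth_append)
    qed
  qed
  have wtV: "wt t \<in> V" if "t < 2 * k" for t
    using that lab lu by (auto simp: wt_def nth_append)
  let ?q = "quot_map R"
  have DUd: "DUp F (Xg k p p') = ((\<lambda>x. 2 * x) ` V \<union> (\<lambda>x. 2 * x + 1) ` (\<mu> ` {0..<2 * k}),
      (\<lambda>e. (\<lambda>x. 2 * x) ` e) ` E \<union> (\<lambda>e. (\<lambda>x. 2 * x + 1) ` e) ` {}, map (\<lambda>x. 2 * x) u, map (\<lambda>x. 2 * x) v)"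
    unfolding Fd Xd DUp_simp ..
  have vert: "?q ` ((\<lambda>x. 2 * x) ` V \<union> (\<lambda>x. 2 * x + 1) ` (\<mu> ` {0..<2 * k})) = (?q \<circ> (\<lambda>x. 2 * x)) ` V"
  proof -
    have "?q ` ((\<lambda>x. 2 * x + 1) ` (\<mu> ` {0..<2 * k})) \<subseteq> (?q \<circ> (\<lambda>x. 2 * x)) ` V"
    proof
      fix y assume "y \<in> ?q ` ((\<lambda>x. 2 * x + 1) ` (\<mu> ` {0..<2 * k}))"
      then obtain t where t: "t < 2 * k" "y = ?q (2 * \<mu> t + 1)" by auto
      have "(2 * wt t, 2 * \<mu> t + 1) \<in> eqcl R" by (rule eqcl_base[OF K1[OF t(1)]])
      then have "?q (2 * \<mu> t + 1) = ?q (2 * wt t)" by (simp only: quot_map_eq eqcl_sym)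
      then have "y = ?q (2 * wt t)" using t by simp
      then show "y \<in> (?q \<circ> (\<lambda>x. 2 * x)) ` V" using wtV[OF t(1)] by auto
    qed
    then show ?thesis by (auto simp: image_Un image_comp)
  qed
  have par: "bg_parallel F (Xg k p p') = bg_map (?q \<circ> (\<lambda>x. 2 * x)) F"
  proof -
    have "bg_parallel F (Xg k p p') = bg_map ?q (DUp F (Xg k p p'))" unfolding parallel_eq R_def ..
    also have "\<dots> = bg_map (?q \<circ> (\<lambda>x. 2 * x)) F"
    proof -
      have "(\<lambda>e. ?q ` e) ` ((\<lambda>e. (\<lambda>x. 2 * x) ` e) ` E \<union> (\<lambda>e. (\<lambda>x. 2 * x + 1) ` e) ` {})
          = (\<lambda>e. (?q \<circ> (\<lambda>x. 2 * x)) ` e) ` E" by (simp add: image_comp)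
      moreover have "map ?q (map (\<lambda>x. 2 * x) l) = map (?q \<circ> (\<lambda>x. 2 * x)) l" for l by simp
      ultimately show ?thesis by (simp only: DUd[unfolded Fd] Fd bg_map_simp vert)
    qed
    finally show ?thesis .
  qed
  define \<rho> where "\<rho> = rn (wt p') (wt p)"
  have kern: "?q (2 * x) = ?q (2 * y) \<longleftrightarrow> \<rho> x = \<rho> y" for x y
  proof
    assume "?q (2 * x) = ?q (2 * y)"
    then have "(2 * x, 2 * y) \<in> eqcl R" by (simp add: quot_map_eq)
    moreover define \<phi> where "\<phi> n = (if even n then \<rho> (n div 2) else \<rho> (wt (n div 2)))" for n
    have "\<phi> a = \<phi> b" if ab: "(a, b) \<in> R" for a b
    proof -
      obtain t where t: "t < 2 * k" "a = 2 * wt t" "b = 2 * \<mu> t + 1" using K2[OF ab] by blast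
      have e1: "\<phi> (2 * wt t) = \<rho> (wt t)" by (simp add: \<phi>_def)
      have e2: "\<phi> (2 * \<mu> t + 1) = \<rho> (wt (\<mu> t))" by (simp add: \<phi>_def)
      have "\<rho> (wt t) = \<rho> (wt (\<mu> t))" by (cases "t = p'") (simp_all add: \<rho>_def \<mu>_def)
      then show ?thesis using t e1 e2 by simp
    qed
    ultimately have "\<phi> (2 * x) = \<phi> (2 * y)" using eqcl_respect[of R \<phi>] by blast
    then show "\<rho> x = \<rho> y" by (simp add: \<phi>_def)
  next
    assume h: "\<rho> x = \<rho> y"
    have a: "(2 * wt p, 2 * p + 1) \<in> R" using K1[OF p(1)] by (simp add: \<mu>_def)
    have b: "(2 * wt p', 2 * p + 1) \<in> R" using K1[OF p(2)] by (simp add: \<mu>_def)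
    have pp: "(2 * wt p, 2 * wt p') \<in> eqcl R" using a b by (meson eqcl_base eqcl_sym eqcl_trans)
    show "?q (2 * x) = ?q (2 * y)"
    proof (cases "x = y")
      case False
      then have "(x = wt p' \<and> y = wt p) \<or> (x = wt p \<and> y = wt p')" using h by (auto simp: \<rho>_def split: if_splits)
      then show ?thesis using pp by (auto simp: quot_map_eq intro: eqcl_sym)
    qed simp
  qed
  have "bg_iso (bg_map (?q \<circ> (\<lambda>x. 2 * x)) (V, E, u, v)) (bg_map \<rho> (V, E, u, v))"
  proof (rule kern_iso)
    show "wfg (V, E, u, v)" using w Fd by simp
    show "(?q \<circ> (\<lambda>x. 2 * x)) x = (?q \<circ> (\<lambda>x. 2 * x)) y \<longleftrightarrow> \<rho> x = \<rho> y" for x y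
      by (simp only: comp_apply kern)
  qed
  note iso = this
  have 1: "bg_parallel F (Xg k p p') = bg_map (?q \<circ> (\<lambda>x. 2 * x)) (V, E, u, v)" using par Fd by (simp only:)
  have 2: "bg_map (rn (wpos F p') (wpos F p)) F = bg_map \<rho> (V, E, u, v)" by (simp only: wpos \<rho>_def) (simp only: Fd)
  show ?thesis unfolding 1 2 by (rule iso)
qed

lemma find_edge:
  assumes "i0 < k" "T i0"
  shows "\<exists>pz pw. {pz, pw} \<in> EC k \<and> pz \<noteq> pw \<and> k \<le> pw \<and> pw < 2 * k \<and> T (pw - k) \<and> pz < 2 * k
     \<and> (pz < k \<or> \<not> T (pz - k))"
proof (cases "\<forall>i<k. T i")
  case True
  then show ?thesis using assms by (intro exI[of _ 0] exI[of _ k]) (auto simp: EC_def)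
next
  case False
  then obtain j where j: "j < k" "\<not> T j" by auto
  have "\<exists>i. i + 1 < k \<and> T i \<noteq> T (i + 1)"
  proof (rule ccontr)
    assume "\<not> ?thesis"
    then have c: "\<And>i. i + 1 < k \<Longrightarrow> T i = T (i + 1)" by blast
    have "\<And>i. i < k \<Longrightarrow> T i = T 0"
    proof -
      fix i show "i < k \<Longrightarrow> T i = T 0"
        by (induction i) (use c in auto)
    qed
    then show False using j assms by blast
  qed
  then obtain i where i: "i + 1 < k" "T i \<noteq> T (i + 1)" by blast
  have e: "{k + i, k + i + 1} \<in> EC k" using i unfolding EC_def by auto
  show ?thesis
  proof (cases "T i")
    case True
    then show ?thesis using i e by (intro exI[of _ "k + i + 1"] exI[of _ "k + i"]) (auto simp: insert_commute)
  next
    case False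
    then show ?thesis using i e by (intro exI[of _ "k + i"] exI[of _ "k + i + 1"]) auto
  qed
qed



lemma bg_map_ident: "bg_map (\<lambda>x. x) F = F"
  by (cases F rule: prod_cases4) simp

lemma pair_pick:
  assumes "{h c, h d} = {a, b}" "a \<noteq> b"
  obtains a1 b1 where "{c, d} = {a1, b1}" "h a1 = a" "h b1 = b"
proof -
  have "(a = h c \<and> b = h d) \<or> (a = h d \<and> b = h c)" using assms(1) by (auto simp: doubleton_eq_iff)
  then show ?thesis using that by (metis insert_commute)
qed

lemma contr_filt:
  assumes w: "wfg (V, E, u, v)" and e1: "{a1, b1} \<in> E" "a1 \<noteq> b1" and np: "\<not> pr {a1, b1}"
  shows "bminor (V, E, u, v) (bg_map (rn b1 a1) (filtE pr (V, E, u, v)))"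
proof -
  have m0: "bminor (V, E, u, v) (V, {e \<in> E. pr e \<or> e = {a1, b1}}, u, v)"
    using minor_filtE[OF w, of "\<lambda>e. pr e \<or> e = {a1, b1}"] by simp
  have st: "bminor_step (V, {e \<in> E. pr e \<or> e = {a1, b1}}, u, v)
     (bg_map (rn b1 a1) (V, {e \<in> E. pr e \<or> e = {a1, b1}} - {{a1, b1}}, u, v))"
    using e1 by (intro contr) simp_all
  have "{e \<in> E. pr e \<or> e = {a1, b1}} - {{a1, b1}} = {e \<in> E. pr e}" using np by blast
  then show ?thesis using bminor_trans[OF m0 bminor_step1[OF st]] by simp
qed

lemma merge_series:
  assumes wA: "wfg A1" and wB: "wfg B1"
    and g1: "\<And>x. rn b0 a0 (2 * x) = 2 * s x" and g2: "\<And>x. rn b0 a0 (2 * x + 1) = 2 * t x + 1"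
  shows "bg_iso (bg_series (bg_map s A1) (bg_map t B1))
     (bg_map (rn (quot_map (Rs A1 B1) b0) (quot_map (Rs A1 B1) a0) \<circ> quot_map (Rs A1 B1)) (DUs A1 B1))"
proof -
  have "bg_series (bg_map s A1) (bg_map t B1)
      = bg_map (quot_map (mapR (rn b0 a0) (Rs A1 B1))) (bg_map (rn b0 a0) (DUs A1 B1))"
    unfolding series_eq DU_map[OF g1 g2] ..
  moreover have "wfg (DUs A1 B1)" using wfg_DU[OF wA wB] by simp
  ultimately show ?thesis using merge_iso by simp
qed

lemma merge_parallel:
  assumes wA: "wfg A1" and wB: "wfg B1"
    and g1: "\<And>x. rn b0 a0 (2 * x) = 2 * s x" and g2: "\<And>x. rn b0 a0 (2 * x + 1) = 2 * t x + 1"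
  shows "bg_iso (bg_parallel (bg_map s A1) (bg_map t B1))
     (bg_map (rn (quot_map (Rp A1 B1) b0) (quot_map (Rp A1 B1) a0) \<circ> quot_map (Rp A1 B1)) (DUp A1 B1))"
proof -
  have "bg_parallel (bg_map s A1) (bg_map t B1)
      = bg_map (quot_map (mapR (rn b0 a0) (Rp A1 B1))) (bg_map (rn b0 a0) (DUp A1 B1))"
    unfolding parallel_eq DU_map[OF g1 g2] ..
  moreover have "wfg (DUp A1 B1)" using wfg_DU[OF wA wB] by simp
  ultimately show ?thesis using merge_iso by simp
qed

lemma g_left: "rn (2 * b) (2 * a) (2 * x) = 2 * rn b a x" "rn (2 * b) (2 * a) (2 * x + 1) = 2 * x + 1"
  by simp_all

lemma g_right: "rn (2 * b + 1) (2 * a + 1) (2 * x) = 2 * x" "rn (2 * b + 1) (2 * a + 1) (2 * x + 1) = 2 * rn b a x + 1"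
  by simp_all



lemma series_step:
  assumes wA: "wfg A" and wB: "wfg B" and lA: "lenk k A" and lB: "lenk k B"
    and st: "bminor_step (bg_series A B) G'"
  shows "(\<exists>A' B'. bminor A A' \<and> bminor B B' \<and> bg_iso (bg_series A' B') G')
     \<or> (\<exists>A1 B1 X A2. bminor A A1 \<and> bminor B B1 \<and> X \<in> QP k \<and> bg_iso (bg_parallel A1 X) A2
           \<and> bg_iso (bg_series A2 B1) G')"
proof -
  obtain VA EA uA vA where Ad: "A = (VA, EA, uA, vA)" by (cases A rule: prod_cases4) auto
  obtain VB EB uB vB where Bd: "B = (VB, EB, uB, vB)" by (cases B rule: prod_cases4) auto
  have luA: "length uA = k" "length vA = k" using lA Ad by auto
  have luB: "length uB = k" "length vB = k" using lB Bd by auto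
  have labA: "set uA \<subseteq> VA" "set vA \<subseteq> VA" using wA Ad by (auto simp: wfg_simp)
  have labB: "set uB \<subseteq> VB" "set vB \<subseteq> VB" using wB Bd by (auto simp: wfg_simp)
  define R where "R = Rs A B"
  define q where "q = quot_map R"
  define VH where "VH = (\<lambda>x. 2 * x) ` VA \<union> (\<lambda>x. 2 * x + 1) ` VB"
  define EH where "EH = (\<lambda>e. (\<lambda>x. 2 * x) ` e) ` EA \<union> (\<lambda>e. (\<lambda>x. 2 * x + 1) ` e) ` EB"
  define l1 where "l1 = map (\<lambda>x. 2 * x) uA"
  define l2 where "l2 = map (\<lambda>x. 2 * x + 1) vB"
  have Hd: "DUs A B = (VH, EH, l1, l2)" unfolding Ad Bd DUs_simp VH_def EH_def l1_def l2_def ..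
  have Rd: "R = set (zip (map (\<lambda>x. 2 * x) vA) (map (\<lambda>x. 2 * x + 1) uB))"
    unfolding R_def Ad Bd Rs_simp ..
  have wH: "wfg (VH, EH, l1, l2)" using wfg_DU[OF wA wB] Hd by simp
  have Gd: "bg_series A B = (q ` VH, (\<lambda>e. q ` e) ` EH, map q l1, map q l2)"
    unfolding series_eq Hd R_def[symmetric] q_def[symmetric] bg_map_simp ..
  have GH: "bg_series A B' = bg_map (quot_map (Rs A B')) (DUs A B')" for B' by (rule series_eq)
  have wG': "wfg G'" using wfg_step[OF st] wfg_bg_map[OF wH] Gd by (simp add: series_eq Hd R_def q_def)
  have domR: "a \<in> (\<lambda>x. 2 * x) ` set vA" "b \<in> (\<lambda>x. 2 * x + 1) ` set uB" if "(a, b) \<in> R" for a b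
    using that unfolding Rd by (auto dest: set_zip_leftD set_zip_rightD)
  have Rnth: "(2 * vA ! i, 2 * uB ! i + 1) \<in> R" if "i < k" for i
    unfolding Rd set_zip_nth using that luA luB by (auto intro!: exI[of _ i])
  from step_cases[OF st[unfolded Gd]] show ?thesis
  proof (elim disjE exE bexE conjE)
    fix e assume G': "G' = (q ` VH, (\<lambda>e. q ` e) ` EH - {e}, map q l1, map q l2)"
    define A' where "A' = filtE (\<lambda>e1. q ` ((\<lambda>x. 2 * x) ` e1) \<noteq> e) A"
    define B' where "B' = filtE (\<lambda>e1. q ` ((\<lambda>x. 2 * x + 1) ` e1) \<noteq> e) B"
    have "G' = bg_map q (filtE (\<lambda>e'. q ` e' \<noteq> e) (VH, EH, l1, l2))" unfolding G' by (rule edel_base)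
    also have "\<dots> = bg_map q (DUs A' B')" unfolding A'_def B'_def DUs_filt[of "\<lambda>e'. q ` e' \<noteq> e"] Hd ..
    also have "\<dots> = bg_series A' B'" unfolding series_eq A'_def B'_def R_filt R_def[symmetric] q_def ..
    finally have "bg_series A' B' = G'" by simp
    then have "bg_iso (bg_series A' B') G'" using iso_refl[OF wG'] by simp
    moreover have "bminor A A'" "bminor B B'" unfolding A'_def B'_def using minor_filtE wA wB by auto
    ultimately show ?thesis by blast
  next
    fix a b assume ab: "{a, b} \<in> (\<lambda>e. q ` e) ` EH" "a \<noteq> b"
      and G': "G' = bg_map (rn b a) (q ` VH, (\<lambda>e. q ` e) ` EH - {{a, b}}, map q l1, map q l2)"
    define pr where "pr = (\<lambda>e'. q ` e' \<noteq> {a, b})"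
    define A1 where "A1 = filtE (\<lambda>e1. pr ((\<lambda>x. 2 * x) ` e1)) A"
    define B1 where "B1 = filtE (\<lambda>e1. pr ((\<lambda>x. 2 * x + 1) ` e1)) B"
    have wA1: "wfg A1" "wfg B1" unfolding A1_def B1_def using wA wB wfg_filtE by auto
    have RA1: "Rs A1 B1 = R" unfolding A1_def B1_def R_filt R_def ..
    have fH: "filtE pr (VH, EH, l1, l2) = DUs A1 B1" unfolding A1_def B1_def DUs_filt Hd ..
    have "G' = bg_map (rn b a \<circ> q) (filtE pr (VH, EH, l1, l2))" by (simp only: G' contr_base pr_def)
    then have G'2: "G' = bg_map (rn b a \<circ> q) (DUs A1 B1)" unfolding fH .
    obtain e0 where e0: "e0 \<in> EH" "q ` e0 = {a, b}" using ab by auto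
    from e0(1) show ?thesis unfolding EH_def
    proof (elim UnE imageE)
      fix e1 assume e1: "e1 \<in> EA" "e0 = (\<lambda>x. 2 * x) ` e1"
      obtain c d where cd: "e1 = {c, d}" using wA Ad e1 by (auto simp: wfg_simp)
      have "{(q \<circ> (\<lambda>x. 2 * x)) c, (q \<circ> (\<lambda>x. 2 * x)) d} = {a, b}" using e0 e1 cd by simp
      then obtain a1 b1 where ab1: "{c, d} = {a1, b1}" "q (2 * a1) = a" "q (2 * b1) = b"
        using ab(2) by (rule pair_pick) auto
      have ne: "a1 \<noteq> b1" using ab1 ab(2) by auto
      have e1': "{a1, b1} \<in> EA" using e1 cd ab1 by simp
      have np: "\<not> pr ((\<lambda>x. 2 * x) ` {a1, b1})" unfolding pr_def using ab1 by auto
      have mA: "bminor A (bg_map (rn b1 a1) A1)"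
        unfolding A1_def Ad using contr_filt[OF wA[unfolded Ad] e1' ne, of "\<lambda>e1. pr ((\<lambda>x. 2 * x) ` e1)"] np by simp
      have "bg_iso (bg_series (bg_map (rn b1 a1) A1) (bg_map (\<lambda>x. x) B1))
          (bg_map (rn (q (2 * b1)) (q (2 * a1)) \<circ> q) (DUs A1 B1))"
        using merge_series[OF wA1 g_left] unfolding RA1 q_def .
      then have "bg_iso (bg_series (bg_map (rn b1 a1) A1) B1) G'"
        unfolding G'2 bg_map_ident ab1(2,3) .
      moreover have "bminor B B1" unfolding B1_def using minor_filtE wB by auto
      ultimately show ?thesis using mA by blast
    next
      fix e1 assume e1: "e1 \<in> EB" "e0 = (\<lambda>x. 2 * x + 1) ` e1"
      obtain c d where cd: "e1 = {c, d}" using wB Bd e1 by (auto simp: wfg_simp)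
      have "{(q \<circ> (\<lambda>x. 2 * x + 1)) c, (q \<circ> (\<lambda>x. 2 * x + 1)) d} = {a, b}" using e0 e1 cd by simp
      then obtain a1 b1 where ab1: "{c, d} = {a1, b1}" "q (2 * a1 + 1) = a" "q (2 * b1 + 1) = b"
        using ab(2) by (rule pair_pick) auto
      have ne: "a1 \<noteq> b1" using ab1 ab(2) by auto
      have e1': "{a1, b1} \<in> EB" using e1 cd ab1 by simp
      have np: "\<not> pr ((\<lambda>x. 2 * x + 1) ` {a1, b1})" unfolding pr_def using ab1 by auto
      have mB: "bminor B (bg_map (rn b1 a1) B1)"
        unfolding B1_def Bd using contr_filt[OF wB[unfolded Bd] e1' ne, of "\<lambda>e1. pr ((\<lambda>x. 2 * x + 1) ` e1)"] np by simp
      have gr: "\<And>x. rn (2 * b1 + 1) (2 * a1 + 1) (2 * x) = 2 * (\<lambda>x. x) x"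
        "\<And>x. rn (2 * b1 + 1) (2 * a1 + 1) (2 * x + 1) = 2 * rn b1 a1 x + 1" by simp_all
      have "bg_iso (bg_series (bg_map (\<lambda>x. x) A1) (bg_map (rn b1 a1) B1))
          (bg_map (rn (q (2 * b1 + 1)) (q (2 * a1 + 1)) \<circ> q) (DUs A1 B1))"
        using merge_series[OF wA1 gr] unfolding RA1 q_def .
      then have "bg_iso (bg_series A1 (bg_map (rn b1 a1) B1)) G'"
        unfolding G'2 bg_map_ident ab1(2,3) .
      moreover have "bminor A A1" unfolding A1_def using minor_filtE wA by auto
      ultimately show ?thesis using mB by blast
    qed
  next
    fix x assume xV: "x \<in> q ` VH" and xl: "x \<notin> set (map q l1)" "x \<notin> set (map q l2)"
      and G': "G' = (q ` VH - {x}, {e \<in> (\<lambda>e. q ` e) ` EH. x \<notin> e}, map q l1, map q l2)"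
    have dom2: "2 * a0 \<notin> Domain R" "2 * a0 \<notin> Range R" if "a0 \<notin> set vA" for a0
      using domR that by force+
    have dom3: "2 * b0 + 1 \<notin> Domain R" "2 * b0 + 1 \<notin> Range R" if "b0 \<notin> set uB" for b0
      using domR that by force+
    have sing: "z = y0" if "y0 \<notin> Domain R" "y0 \<notin> Range R" "q z = q y0" for z y0
    proof -
      have "(y0, z) \<in> eqcl R" using that(3) unfolding q_def quot_map_eq by (rule eqcl_sym)
      then show ?thesis using eqcl_isolated that(1,2) by blast
    qed
    consider (a) a0 where "a0 \<in> VA" "q (2 * a0) = x" "a0 \<notin> set vA"
      | (b) b0 where "b0 \<in> VB" "q (2 * b0 + 1) = x" "b0 \<notin> set uB"
      | (c) "\<forall>a0\<in>VA. q (2 * a0) = x \<longrightarrow> a0 \<in> set vA" "\<forall>b0\<in>VB. q (2 * b0 + 1) = x \<longrightarrow> b0 \<in> set uB"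
      by blast
    then show ?thesis
    proof cases
      case (a a0)
      have nu: "a0 \<notin> set uA" using xl a(2) unfolding l1_def by auto
      have "G' = bg_map q (vdelg (2 * a0) (VH, EH, l1, l2))"
        unfolding G' a(2)[symmetric]
        by (rule vdel_base[OF wH]) (use a sing dom2 VH_def in auto)
      also have "\<dots> = bg_series (vdelg a0 A) B"
        unfolding series_eq Hd[symmetric] DU_vdel1 R_vdel R_def[symmetric] q_def ..
      finally have "bg_iso (bg_series (vdelg a0 A) B) G'" using iso_refl[OF wG'] by simp
      moreover have "bminor A (vdelg a0 A)" unfolding Ad vdelg_simp
        by (rule bminor_step1, rule vdel) (use a nu in auto)
      ultimately show ?thesis using bminor_refl by blast
    next
      case (b b0)
      have nv: "b0 \<notin> set vB" using xl b(2) unfolding l2_def by auto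
      have "G' = bg_map q (vdelg (2 * b0 + 1) (VH, EH, l1, l2))"
        unfolding G' b(2)[symmetric]
        by (rule vdel_base[OF wH]) (use b sing dom3 VH_def in auto)
      also have "\<dots> = bg_series A (vdelg b0 B)"
        unfolding series_eq Hd[symmetric] DU_vdel2 R_vdel R_def[symmetric] q_def ..
      finally have "bg_iso (bg_series A (vdelg b0 B)) G'" using iso_refl[OF wG'] by simp
      moreover have "bminor B (vdelg b0 B)" unfolding Bd vdelg_simp
        by (rule bminor_step1, rule vdel) (use b nv in auto)
      ultimately show ?thesis using bminor_refl by blast
    next
      case c
      have "\<exists>i<k. q (2 * vA ! i) = x"
      proof -
        obtain y where y: "y \<in> VH" "x = q y" using xV by auto
        from y(1) show ?thesis unfolding VH_def
        proof (elim UnE imageE)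
          fix a0 assume a0: "a0 \<in> VA" "y = 2 * a0"
          then have "a0 \<in> set vA" using c(1) y(2) by auto
          then obtain i where "i < length vA" "vA ! i = a0" by (auto simp: in_set_conv_nth)
          then show ?thesis using a0 y luA by auto
        next
          fix b0 assume b0: "b0 \<in> VB" "y = 2 * b0 + 1"
          then have "b0 \<in> set uB" using c(2) y(2) by auto
          then obtain i where i: "i < length uB" "uB ! i = b0" by (auto simp: in_set_conv_nth)
          then have "q (2 * vA ! i) = q (2 * b0 + 1)" using Rnth[of i] luB
            unfolding q_def quot_map_eq by (auto intro: eqcl_base)
          then show ?thesis using i b0 y luB by auto
        qed
      qed
      then obtain i0 where i0: "i0 < k" "q (2 * vA ! i0) = x" by blast
      obtain pz pw where pzw: "{pz, pw} \<in> EC k" "pz \<noteq> pw" "k \<le> pw" "pw < 2 * k"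
          "q (2 * vA ! (pw - k)) = x" "pz < 2 * k" "pz < k \<or> q (2 * vA ! (pz - k)) \<noteq> x"
        using find_edge[of i0 k "\<lambda>i. q (2 * vA ! i) = x", OF i0] by blast
      define wt where "wt t = (uA @ vA) ! t" for t
      have w0: "wt pw = vA ! (pw - k)" unfolding wt_def using pzw(3) luA by (simp add: nth_append)
      have qw0: "q (2 * wt pw) = x" using w0 pzw(5) by simp
      have qz0: "q (2 * wt pz) \<noteq> x"
      proof (cases "pz < k")
        case True
        then have "wt pz = uA ! pz" unfolding wt_def using luA by (simp add: nth_append)
        then have "q (2 * wt pz) \<in> set (map q l1)" unfolding l1_def using True luA by auto
        then show ?thesis using xl by auto
      next
        case False
        then have "wt pz = vA ! (pz - k)" unfolding wt_def using luA by (simp add: nth_append)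
        then show ?thesis using pzw(7) False by simp
      qed
      have wtV: "wt t \<in> VA" if "t < 2 * k" for t
        using that labA luA unfolding wt_def by (auto simp: nth_append)
      define z where "z = q (2 * wt pz)"
      have zV: "z \<in> q ` VH" unfolding z_def VH_def using wtV[OF pzw(6)] by auto
      have zne: "z \<noteq> x" using qz0 z_def by simp
      define pr where "pr = (\<lambda>e'. x \<notin> q ` e')"
      define A1 where "A1 = filtE (\<lambda>e1. pr ((\<lambda>x. 2 * x) ` e1)) A"
      define B1 where "B1 = filtE (\<lambda>e1. pr ((\<lambda>x. 2 * x + 1) ` e1)) B"
      have wA1: "wfg A1" "wfg B1" unfolding A1_def B1_def using wA wB wfg_filtE by auto
      have lA1: "lenk k A1" unfolding A1_def using lA lenk_filtE by auto
      have RA1: "Rs A1 B1 = R" unfolding A1_def B1_def R_filt R_def ..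
      have fH: "filtE pr (VH, EH, l1, l2) = DUs A1 B1" unfolding A1_def B1_def DUs_filt Hd ..
      have "G' = bg_map (rn x z \<circ> q) (filtE pr (VH, EH, l1, l2))"
        unfolding G' pr_def by (rule glue_base[OF xl zV zne])
      then have G'2: "G' = bg_map (rn x z \<circ> q) (DUs A1 B1)" unfolding fH .
      have "bg_iso (bg_series (bg_map (rn (wt pw) (wt pz)) A1) (bg_map (\<lambda>x. x) B1))
          (bg_map (rn (q (2 * wt pw)) (q (2 * wt pz)) \<circ> q) (DUs A1 B1))"
        using merge_series[OF wA1 g_left] unfolding RA1 q_def .
      then have iso2: "bg_iso (bg_series (bg_map (rn (wt pw) (wt pz)) A1) B1) G'"
        unfolding G'2 bg_map_ident qw0 z_def[symmetric] .
      have wp: "wpos A1 t = wt t" for t unfolding A1_def Ad filtE_simp wpos_def wt_def by simp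
      have iso1: "bg_iso (bg_parallel A1 (Xg k pz pw)) (bg_map (rn (wt pw) (wt pz)) A1)"
        using XL[OF wA1(1) lA1 pzw(6) pzw(4)] unfolding wp .
      have XQ: "Xg k pz pw \<in> QP k" by (rule Xg_QP[OF pzw(1,2)])
      have "bminor A A1" "bminor B B1" unfolding A1_def B1_def using minor_filtE wA wB by auto
      then show ?thesis using iso1 iso2 XQ by blast
    qed
  qed
qed



lemma alllab_step: assumes st: "bminor_step F G" and al: "alllab F" shows "alllab G"
proof -
  obtain V E u v where F: "F = (V, E, u, v)" by (cases F rule: prod_cases4) auto
  from step_cases[OF st[unfolded F]] show ?thesis
  proof (elim disjE exE bexE conjE)
    fix e assume "G = (V, E - {e}, u, v)" then show ?thesis using al F by simp
  next
    fix x assume "x \<in> V" "x \<notin> set u" "x \<notin> set v" then show ?thesis using al F by auto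
  next
    fix a b assume G: "G = bg_map (rn b a) (V, E - {{a, b}}, u, v)"
    have "rn b a ` V \<subseteq> set (map (rn b a) u) \<union> set (map (rn b a) v)" using al F by auto
    then show ?thesis unfolding G bg_map_simp alllab_simp .
  qed
qed

lemma alllab_minor: "bminor F G \<Longrightarrow> alllab F \<Longrightarrow> alllab G"
  unfolding bminor_def
proof (induction rule: rtranclp_induct)
  case (step y z) then show ?case using alllab_step[of y z] by blast
qed simp

lemma iso_props: "bg_iso F G \<Longrightarrow> (wfg F \<longrightarrow> wfg G) \<and> (lenk k F \<longrightarrow> lenk k G) \<and> (alllab F \<longrightarrow> alllab G)"
proof -
  assume "bg_iso F G"
  then obtain f where G: "G = bg_map f F" by (auto simp: bg_iso_alt)
  obtain V E u v where F: "F = (V, E, u, v)" by (cases F rule: prod_cases4) auto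
  have "alllab F \<Longrightarrow> alllab G"
  proof -
    assume "alllab F"
    then have "f ` V \<subseteq> set (map f u) \<union> set (map f v)" using F by auto
    then show "alllab G" unfolding G F bg_map_simp alllab_simp .
  qed
  then show ?thesis using G F wfg_bg_map by auto
qed

lemma QP_props: "H \<in> QP k \<Longrightarrow> wfg H \<and> lenk k H \<and> alllab H"
proof -
  assume "H \<in> QP k"
  then obtain H0 where H0: "bminor (bgC k) H0" "bg_iso H0 H" unfolding QP_def by blast
  have "wfg H0" "lenk k H0" "alllab H0"
    using wfg_minor[OF H0(1) wfg_bgC] lenk_minor[OF H0(1) lenk_bgC] alllab_minor[OF H0(1) alllab_bgC] .
  then show ?thesis using iso_props[OF H0(2)] by blast
qed

lemma QP_minor: "H \<in> QP k \<Longrightarrow> bminor H H' \<Longrightarrow> H' \<in> QP k"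
proof -
  assume "H \<in> QP k" "bminor H H'"
  then obtain H0 where H0: "bminor (bgC k) H0" "bg_iso H0 H" unfolding QP_def by blast
  have "wfg H0" using wfg_minor[OF H0(1) wfg_bgC] .
  then obtain H1 where "bminor H0 H1" "bg_iso H1 H'" using pullback[OF \<open>bminor H H'\<close> _ H0(2)] by blast
  then show "H' \<in> QP k" unfolding QP_def using H0(1) bminor_trans by blast
qed

lemma QS_props: "H \<in> QS k \<Longrightarrow> wfg H \<and> lenk k H"
proof -
  assume "H \<in> QS k"
  then obtain H0 where H0: "bminor (bgM k) H0" "bg_iso H0 H" unfolding QS_def by blast
  have "wfg H0" "lenk k H0"
    using wfg_minor[OF H0(1) wfg_bgM] lenk_minor[OF H0(1) lenk_bgM] .
  then show ?thesis using iso_props[OF H0(2)] by blast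
qed

lemma QS_minor: "H \<in> QS k \<Longrightarrow> bminor H H' \<Longrightarrow> H' \<in> QS k"
proof -
  assume "H \<in> QS k" "bminor H H'"
  then obtain H0 where H0: "bminor (bgM k) H0" "bg_iso H0 H" unfolding QS_def by blast
  have "wfg H0" using wfg_minor[OF H0(1) wfg_bgM] .
  then obtain H1 where "bminor H0 H1" "bg_iso H1 H'" using pullback[OF \<open>bminor H H'\<close> _ H0(2)] by blast
  then show "H' \<in> QS k" unfolding QS_def using H0(1) bminor_trans by blast
qed



lemma parallel_step:
  assumes wA: "wfg A" and lA: "lenk k A" and QB: "B \<in> QP k"
    and st: "bminor_step (bg_parallel A B) G'"
  shows "\<exists>A' B'. bminor A A' \<and> B' \<in> QP k \<and> bg_iso (bg_parallel A' B') G'"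
proof -
  have wB: "wfg B" and lB: "lenk k B" and alB: "alllab B" using QP_props[OF QB] by auto
  have QB': "B' \<in> QP k" if "bminor B B'" for B' using QP_minor[OF QB that] .
  obtain VA EA uA vA where Ad: "A = (VA, EA, uA, vA)" by (cases A rule: prod_cases4) auto
  obtain VB EB uB vB where Bd: "B = (VB, EB, uB, vB)" by (cases B rule: prod_cases4) auto
  have luA: "length uA = k" "length vA = k" using lA Ad by auto
  have luB: "length uB = k" "length vB = k" using lB Bd by auto
  have alB': "VB \<subseteq> set uB \<union> set vB" using alB Bd by simp
  define R where "R = Rp A B"
  define q where "q = quot_map R"
  define VH where "VH = (\<lambda>x. 2 * x) ` VA \<union> (\<lambda>x. 2 * x + 1) ` VB"
  define EH where "EH = (\<lambda>e. (\<lambda>x. 2 * x) ` e) ` EA \<union> (\<lambda>e. (\<lambda>x. 2 * x + 1) ` e) ` EB"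
  define l1 where "l1 = map (\<lambda>x. 2 * x) uA"
  define l2 where "l2 = map (\<lambda>x. 2 * x) vA"
  have Hd: "DUp A B = (VH, EH, l1, l2)" unfolding Ad Bd DUp_simp VH_def EH_def l1_def l2_def ..
  have Rd: "R = set (zip (map (\<lambda>x. 2 * x) uA) (map (\<lambda>x. 2 * x + 1) uB))
     \<union> set (zip (map (\<lambda>x. 2 * x) vA) (map (\<lambda>x. 2 * x + 1) vB))"
    unfolding R_def Ad Bd Rp_simp ..
  have wH: "wfg (VH, EH, l1, l2)" using wfg_DU[OF wA wB] Hd by simp
  have Gd: "bg_parallel A B = (q ` VH, (\<lambda>e. q ` e) ` EH, map q l1, map q l2)"
    unfolding parallel_eq Hd R_def[symmetric] q_def[symmetric] bg_map_simp ..
  have wG': "wfg G'" using wfg_step[OF st] wfg_bg_map[OF wH] Gd by (simp add: parallel_eq Hd R_def q_def)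
  have domR: "a \<in> (\<lambda>x. 2 * x) ` (set uA \<union> set vA)" "odd b" if "(a, b) \<in> R" for a b
  proof -
    have "a \<in> set (map (\<lambda>x. 2 * x) uA) \<union> set (map (\<lambda>x. 2 * x) vA)"
      "b \<in> set (map (\<lambda>x. 2 * x + 1) uB) \<union> set (map (\<lambda>x. 2 * x + 1) vB)"
      using that unfolding Rd by (meson UnE UnI1 UnI2 set_zip_leftD set_zip_rightD)+
    then show "a \<in> (\<lambda>x. 2 * x) ` (set uA \<union> set vA)" "odd b" by auto
  qed
  have Rnth: "(2 * uA ! i, 2 * uB ! i + 1) \<in> R" "(2 * vA ! i, 2 * vB ! i + 1) \<in> R" if "i < k" for i
    unfolding Rd set_zip_nth using that luA luB by (auto intro!: exI[of _ i])
  from step_cases[OF st[unfolded Gd]] show ?thesis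
  proof (elim disjE exE bexE conjE)
    fix e assume G': "G' = (q ` VH, (\<lambda>e. q ` e) ` EH - {e}, map q l1, map q l2)"
    define A' where "A' = filtE (\<lambda>e1. q ` ((\<lambda>x. 2 * x) ` e1) \<noteq> e) A"
    define B' where "B' = filtE (\<lambda>e1. q ` ((\<lambda>x. 2 * x + 1) ` e1) \<noteq> e) B"
    have "G' = bg_map q (filtE (\<lambda>e'. q ` e' \<noteq> e) (VH, EH, l1, l2))" unfolding G' by (rule edel_base)
    also have "\<dots> = bg_map q (DUp A' B')" unfolding A'_def B'_def DUp_filt[of "\<lambda>e'. q ` e' \<noteq> e"] Hd ..
    also have "\<dots> = bg_parallel A' B'" unfolding parallel_eq A'_def B'_def R_filt R_def[symmetric] q_def ..
    finally have "bg_parallel A' B' = G'" by simp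
    then have "bg_iso (bg_parallel A' B') G'" using iso_refl[OF wG'] by simp
    moreover have "bminor A A'" "bminor B B'" unfolding A'_def B'_def using minor_filtE wA wB by auto
    ultimately show ?thesis using QB' by blast
  next
    fix a b assume ab: "{a, b} \<in> (\<lambda>e. q ` e) ` EH" "a \<noteq> b"
      and G': "G' = bg_map (rn b a) (q ` VH, (\<lambda>e. q ` e) ` EH - {{a, b}}, map q l1, map q l2)"
    define pr where "pr = (\<lambda>e'. q ` e' \<noteq> {a, b})"
    define A1 where "A1 = filtE (\<lambda>e1. pr ((\<lambda>x. 2 * x) ` e1)) A"
    define B1 where "B1 = filtE (\<lambda>e1. pr ((\<lambda>x. 2 * x + 1) ` e1)) B"
    have wA1: "wfg A1" "wfg B1" unfolding A1_def B1_def using wA wB wfg_filtE by auto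
    have RA1: "Rp A1 B1 = R" unfolding A1_def B1_def R_filt R_def ..
    have fH: "filtE pr (VH, EH, l1, l2) = DUp A1 B1" unfolding A1_def B1_def DUp_filt Hd ..
    have "G' = bg_map (rn b a \<circ> q) (filtE pr (VH, EH, l1, l2))" by (simp only: G' contr_base pr_def)
    then have G'2: "G' = bg_map (rn b a \<circ> q) (DUp A1 B1)" unfolding fH .
    obtain e0 where e0: "e0 \<in> EH" "q ` e0 = {a, b}" using ab by auto
    from e0(1) show ?thesis unfolding EH_def
    proof (elim UnE imageE)
      fix e1 assume e1: "e1 \<in> EA" "e0 = (\<lambda>x. 2 * x) ` e1"
      obtain c d where cd: "e1 = {c, d}" using wA Ad e1 by (auto simp: wfg_simp)
      have "{(q \<circ> (\<lambda>x. 2 * x)) c, (q \<circ> (\<lambda>x. 2 * x)) d} = {a, b}" using e0 e1 cd by simp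
      then obtain a1 b1 where ab1: "{c, d} = {a1, b1}" "q (2 * a1) = a" "q (2 * b1) = b"
        using ab(2) by (rule pair_pick) auto
      have ne: "a1 \<noteq> b1" using ab1 ab(2) by auto
      have e1': "{a1, b1} \<in> EA" using e1 cd ab1 by simp
      have np: "\<not> pr ((\<lambda>x. 2 * x) ` {a1, b1})" unfolding pr_def using ab1 by auto
      have mA: "bminor A (bg_map (rn b1 a1) A1)"
        unfolding A1_def Ad using contr_filt[OF wA[unfolded Ad] e1' ne, of "\<lambda>e1. pr ((\<lambda>x. 2 * x) ` e1)"] np by simp
      have "bg_iso (bg_parallel (bg_map (rn b1 a1) A1) (bg_map (\<lambda>x. x) B1))
          (bg_map (rn (q (2 * b1)) (q (2 * a1)) \<circ> q) (DUp A1 B1))"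
        using merge_parallel[OF wA1 g_left] unfolding RA1 q_def .
      then have "bg_iso (bg_parallel (bg_map (rn b1 a1) A1) B1) G'"
        unfolding G'2 bg_map_ident ab1(2,3) .
      moreover have "B1 \<in> QP k" unfolding B1_def using minor_filtE wB QB' by auto
      ultimately show ?thesis using mA by blast
    next
      fix e1 assume e1: "e1 \<in> EB" "e0 = (\<lambda>x. 2 * x + 1) ` e1"
      obtain c d where cd: "e1 = {c, d}" using wB Bd e1 by (auto simp: wfg_simp)
      have "{(q \<circ> (\<lambda>x. 2 * x + 1)) c, (q \<circ> (\<lambda>x. 2 * x + 1)) d} = {a, b}" using e0 e1 cd by simp
      then obtain a1 b1 where ab1: "{c, d} = {a1, b1}" "q (2 * a1 + 1) = a" "q (2 * b1 + 1) = b"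
        using ab(2) by (rule pair_pick) auto
      have ne: "a1 \<noteq> b1" using ab1 ab(2) by auto
      have e1': "{a1, b1} \<in> EB" using e1 cd ab1 by simp
      have np: "\<not> pr ((\<lambda>x. 2 * x + 1) ` {a1, b1})" unfolding pr_def using ab1 by auto
      have mB: "bminor B (bg_map (rn b1 a1) B1)"
        unfolding B1_def Bd using contr_filt[OF wB[unfolded Bd] e1' ne, of "\<lambda>e1. pr ((\<lambda>x. 2 * x + 1) ` e1)"] np by simp
      have gr: "\<And>x. rn (2 * b1 + 1) (2 * a1 + 1) (2 * x) = 2 * (\<lambda>x. x) x"
        "\<And>x. rn (2 * b1 + 1) (2 * a1 + 1) (2 * x + 1) = 2 * rn b1 a1 x + 1" by simp_all
      have "bg_iso (bg_parallel (bg_map (\<lambda>x. x) A1) (bg_map (rn b1 a1) B1))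
          (bg_map (rn (q (2 * b1 + 1)) (q (2 * a1 + 1)) \<circ> q) (DUp A1 B1))"
        using merge_parallel[OF wA1 gr] unfolding RA1 q_def .
      then have "bg_iso (bg_parallel A1 (bg_map (rn b1 a1) B1)) G'"
        unfolding G'2 bg_map_ident ab1(2,3) .
      moreover have "bminor A A1" unfolding A1_def using minor_filtE wA by auto
      ultimately show ?thesis using mB QB' by blast
    qed
  next
    fix x assume xV: "x \<in> q ` VH" and xl: "x \<notin> set (map q l1)" "x \<notin> set (map q l2)"
      and G': "G' = (q ` VH - {x}, {e \<in> (\<lambda>e. q ` e) ` EH. x \<notin> e}, map q l1, map q l2)"
    have sing: "z = y0" if "y0 \<notin> Domain R" "y0 \<notin> Range R" "q z = q y0" for z y0
    proof -
      have "(y0, z) \<in> eqcl R" using that(3) unfolding q_def quot_map_eq by (rule eqcl_sym)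
      then show ?thesis using eqcl_isolated that(1,2) by blast
    qed
    obtain y where y: "y \<in> VH" "x = q y" using xV by auto
    obtain a0 where a: "a0 \<in> VA" "q (2 * a0) = x"
    proof -
      from y(1) show ?thesis unfolding VH_def
      proof (elim UnE imageE)
        fix a0 assume "a0 \<in> VA" "y = 2 * a0" then show ?thesis using that y by blast
      next
        fix b0 assume b0: "b0 \<in> VB" "y = 2 * b0 + 1"
        then have "b0 \<in> set uB \<union> set vB" using alB' by auto
        then show ?thesis
        proof
          assume "b0 \<in> set uB"
          then obtain i where i: "i < k" "uB ! i = b0" using luB by (auto simp: in_set_conv_nth)
          have "quot_map R (2 * uA ! i) = quot_map R (2 * uB ! i + 1)"
            using eqcl_base[OF Rnth(1)[OF i(1)]] by (simp only: quot_map_eq)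
          then have "q (2 * uA ! i) = x" using b0 y i unfolding q_def by simp
          then have "x \<in> set (map q l1)" unfolding l1_def using i luA by auto
          then show ?thesis using xl by blast
        next
          assume "b0 \<in> set vB"
          then obtain i where i: "i < k" "vB ! i = b0" using luB by (auto simp: in_set_conv_nth)
          have "quot_map R (2 * vA ! i) = quot_map R (2 * vB ! i + 1)"
            using eqcl_base[OF Rnth(2)[OF i(1)]] by (simp only: quot_map_eq)
          then have "q (2 * vA ! i) = x" using b0 y i unfolding q_def by simp
          then have "x \<in> set (map q l2)" unfolding l2_def using i luA by auto
          then show ?thesis using xl by blast
        qed
      qed
    qed
    have nu: "a0 \<notin> set uA" "a0 \<notin> set vA" using xl a(2) unfolding l1_def l2_def by auto
    have dom2: "2 * a0 \<notin> Domain R" "2 * a0 \<notin> Range R" using domR nu by force+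
    have "G' = bg_map q (vdelg (2 * a0) (VH, EH, l1, l2))"
      unfolding G' a(2)[symmetric]
      by (rule vdel_base[OF wH]) (use a sing dom2 VH_def in auto)
    also have "\<dots> = bg_parallel (vdelg a0 A) B"
      unfolding parallel_eq Hd[symmetric] DU_vdel1 R_vdel R_def[symmetric] q_def ..
    finally have "bg_iso (bg_parallel (vdelg a0 A) B) G'" using iso_refl[OF wG'] by simp
    moreover have "bminor A (vdelg a0 A)" unfolding Ad vdelg_simp
      by (rule bminor_step1, rule vdel) (use a nu in auto)
    ultimately show ?thesis using QB by blast
  qed
qed



lemma cyc_props: "length (cyc_order k) = 2 * k" "set (cyc_order k) = {0..<2 * k}"
  unfolding cyc_order_def by auto

lemma rot_props:
  assumes "\<sigma> \<in> rot_group k"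
  shows "\<And>i. i < 2 * k \<Longrightarrow> \<sigma> i < 2 * k" "\<And>j. j < 2 * k \<Longrightarrow> \<exists>i<2 * k. \<sigma> i = j"
proof -
  let ?c = "cyc_order k"
  let ?N = "2 * k"
  obtain r where r: "\<And>j. j < ?N \<Longrightarrow> \<sigma> (?c ! j) = ?c ! ((j + r) mod ?N)"
    using assms unfolding rot_group_def by blast
  have inset: "\<exists>j<?N. ?c ! j = i" if "i < ?N" for i
  proof -
    have "i \<in> set ?c" using that cyc_props by auto
    then show ?thesis using cyc_props(1) by (auto simp: in_set_conv_nth)
  qed
  show "\<sigma> i < ?N" if i: "i < ?N" for i
  proof -
    obtain j where j: "j < ?N" "?c ! j = i" using inset[OF i] by blast
    have "(j + r) mod ?N < ?N" using i by simp
    then have "?c ! ((j + r) mod ?N) \<in> set ?c" using cyc_props(1) by simp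
    then show ?thesis using r[OF j(1)] j(2) cyc_props(2) by auto
  qed
  show "\<exists>i<?N. \<sigma> i = j" if j: "j < ?N" for j
  proof -
    obtain m where m: "m < ?N" "?c ! m = j" using inset[OF j] by blast
    have Np: "0 < ?N" using j by simp
    define n where "n = (m + (?N - r mod ?N)) mod ?N"
    have n: "n < ?N" unfolding n_def using Np by simp
    have "(n + r) mod ?N = (m + (?N - r mod ?N) + r) mod ?N" unfolding n_def by (simp add: mod_add_left_eq)
    also have "m + (?N - r mod ?N) + r = m + ?N + ?N * (r div ?N)"
    proof -
      have "r mod ?N < ?N" using Np by simp
      moreover have "r = ?N * (r div ?N) + r mod ?N" by simp
      ultimately show ?thesis by linarith
    qed
    also have "(m + ?N + ?N * (r div ?N)) mod ?N = m" using m(1) by simp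
    finally have "(n + r) mod ?N = m" .
    then have "\<sigma> (?c ! n) = j" using r[OF n] m by simp
    moreover have "?c ! n < ?N" using n cyc_props by (metis atLeastLessThan_iff nth_mem)
    ultimately show ?thesis by blast
  qed
qed

lemma perm_simp: "bg_perm \<sigma> (V, E, u, v) = (V, E, map (\<lambda>i. (u @ v) ! (\<sigma> i)) [0..<length u],
            map (\<lambda>i. (u @ v) ! (\<sigma> (length u + i))) [0..<length u])"
  by (simp add: bg_perm_def)

lemma perm_labels:
  assumes s: "\<sigma> \<in> rot_group k" and l: "length u = k" "length v = k"
  shows "set (map (\<lambda>i. (u @ v) ! (\<sigma> i)) [0..<k]) \<union> set (map (\<lambda>i. (u @ v) ! (\<sigma> (k + i))) [0..<k])
     = set u \<union> set v"
proof
  show "set (map (\<lambda>i. (u @ v) ! (\<sigma> i)) [0..<k]) \<union> set (map (\<lambda>i. (u @ v) ! (\<sigma> (k + i))) [0..<k])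
     \<subseteq> set u \<union> set v"
  proof -
    have h: "(u @ v) ! (\<sigma> i) \<in> set u \<union> set v" if "i < 2 * k" for i
    proof -
      have "\<sigma> i < length (u @ v)" using rot_props(1)[OF s that] l by simp
      then have "(u @ v) ! (\<sigma> i) \<in> set (u @ v)" by (rule nth_mem)
      then show ?thesis by simp
    qed
    show ?thesis
    proof
      fix y assume "y \<in> set (map (\<lambda>i. (u @ v) ! (\<sigma> i)) [0..<k]) \<union> set (map (\<lambda>i. (u @ v) ! (\<sigma> (k + i))) [0..<k])"
      then obtain i where "(i < k \<and> y = (u @ v) ! (\<sigma> i)) \<or> (i < k \<and> y = (u @ v) ! (\<sigma> (k + i)))" by (auto; blast)
      then show "y \<in> set u \<union> set v"
      proof
        assume "i < k \<and> y = (u @ v) ! (\<sigma> i)" then show ?thesis using h[of i] by auto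
      next
        assume "i < k \<and> y = (u @ v) ! (\<sigma> (k + i))" then show ?thesis using h[of "k + i"] by auto
      qed
    qed
  qed
  show "set u \<union> set v \<subseteq> set (map (\<lambda>i. (u @ v) ! (\<sigma> i)) [0..<k]) \<union> set (map (\<lambda>i. (u @ v) ! (\<sigma> (k + i))) [0..<k])"
  proof
    fix y assume "y \<in> set u \<union> set v"
    then have "y \<in> set (u @ v)" by simp
    then obtain j where j: "j < length (u @ v)" "(u @ v) ! j = y" by (auto simp only: in_set_conv_nth)
    then have j1: "j < 2 * k" using l by simp
    obtain i where i: "i < 2 * k" "\<sigma> i = j" using rot_props(2)[OF s j1] by blast
    show "y \<in> set (map (\<lambda>i. (u @ v) ! (\<sigma> i)) [0..<k]) \<union> set (map (\<lambda>i. (u @ v) ! (\<sigma> (k + i))) [0..<k])"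
    proof (cases "i < k")
      case True then show ?thesis using i j by auto
    next
      case False
      then have "i = k + (i - k)" "i - k < k" using i by auto
      then have "y \<in> set (map (\<lambda>i. (u @ v) ! (\<sigma> (k + i))) [0..<k])" using i j
        by (auto intro!: image_eqI[of _ _ "i - k"])
      then show ?thesis by blast
    qed
  qed
qed

lemma perm_map:
  assumes s: "\<sigma> \<in> rot_group k" and l: "length u = k" "length v = k"
  shows "map g (map (\<lambda>i. (u @ v) ! (\<sigma> i)) [0..<k]) = map (\<lambda>i. (map g u @ map g v) ! (\<sigma> i)) [0..<k]"
    "map g (map (\<lambda>i. (u @ v) ! (\<sigma> (k + i))) [0..<k]) = map (\<lambda>i. (map g u @ map g v) ! (\<sigma> (k + i))) [0..<k]"
proof -
  have "g ((u @ v) ! (\<sigma> i)) = (map g u @ map g v) ! (\<sigma> i)" if "i < 2 * k" for i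
  proof -
    have lt: "\<sigma> i < length (u @ v)" using rot_props(1)[OF s that] l by simp
    show ?thesis by (subst map_append[symmetric]) (rule nth_map[OF lt, symmetric])
  qed
  then show "map g (map (\<lambda>i. (u @ v) ! (\<sigma> i)) [0..<k]) = map (\<lambda>i. (map g u @ map g v) ! (\<sigma> i)) [0..<k]"
    "map g (map (\<lambda>i. (u @ v) ! (\<sigma> (k + i))) [0..<k]) = map (\<lambda>i. (map g u @ map g v) ! (\<sigma> (k + i))) [0..<k]"
    by auto
qed

lemma perm_step:
  assumes s: "\<sigma> \<in> rot_group k" and l: "lenk k F" and st: "bminor_step (bg_perm \<sigma> F) G"
  shows "\<exists>F'. bminor_step F F' \<and> G = bg_perm \<sigma> F'"
proof -
  obtain V E u v where F: "F = (V, E, u, v)" by (cases F rule: prod_cases4) auto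
  have lu: "length u = k" "length v = k" using l F by auto
  define u' where "u' = map (\<lambda>i. (u @ v) ! (\<sigma> i)) [0..<k]"
  define v' where "v' = map (\<lambda>i. (u @ v) ! (\<sigma> (k + i))) [0..<k]"
  have Pd: "bg_perm \<sigma> (V', E', u, v) = (V', E', u', v')" for V' E' unfolding perm_simp u'_def v'_def lu ..
  from step_cases[OF st[unfolded F Pd]] show ?thesis
  proof (elim disjE exE bexE conjE)
    fix e assume "e \<in> E" "G = (V, E - {e}, u', v')"
    then show ?thesis unfolding F Pd[symmetric] by (blast intro: edel)
  next
    fix x assume x: "x \<in> V" "x \<notin> set u'" "x \<notin> set v'" "G = (V - {x}, {e \<in> E. x \<notin> e}, u', v')"
    have "x \<notin> set u" "x \<notin> set v" using x perm_labels[OF s lu] unfolding u'_def v'_def by auto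
    then show ?thesis unfolding F Pd[symmetric] x(4) using x(1) by (blast intro: vdel)
  next
    fix a b assume ab: "{a, b} \<in> E" "a \<noteq> b" and G: "G = bg_map (rn b a) (V, E - {{a, b}}, u', v')"
    have "G = bg_perm \<sigma> (bg_map (rn b a) (V, E - {{a, b}}, u, v))"
      unfolding G bg_map_simp perm_simp length_map lu u'_def v'_def perm_map[OF s lu] ..
    moreover have "bminor_step F (bg_map (rn b a) (V, E - {{a, b}}, u, v))" unfolding F using ab by (rule contr)
    ultimately show ?thesis by blast
  qed
qed



definition Cl :: "nat \<Rightarrow> bgraph \<Rightarrow> bool" where
  "Cl k F = (\<forall>G. bminor F G \<longrightarrow> G \<in> P k)"

lemma wfg_comp: "wfg A \<Longrightarrow> wfg B \<Longrightarrow> wfg (bg_series A B) \<and> wfg (bg_parallel A B)"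
  unfolding series_eq parallel_eq using wfg_DU wfg_bg_map by blast

lemma lenk_comp: "lenk k A \<Longrightarrow> lenk k B \<Longrightarrow> lenk k (bg_series A B) \<and> lenk k (bg_parallel A B)"
proof -
  assume "lenk k A" "lenk k B"
  moreover obtain V E u v where A: "A = (V, E, u, v)" by (cases A rule: prod_cases4) auto
  moreover obtain V' E' u' v' where B: "B = (V', E', u', v')" by (cases B rule: prod_cases4) auto
  ultimately show ?thesis unfolding series_eq parallel_eq A B DUs_simp DUp_simp bg_map_simp lenk_simp
    by simp
qed

lemma perm_props:
  assumes s: "\<sigma> \<in> rot_group k" and w: "wfg F" and l: "lenk k F"
  shows "wfg (bg_perm \<sigma> F) \<and> lenk k (bg_perm \<sigma> F)"
proof -
  obtain V E u v where F: "F = (V, E, u, v)" by (cases F rule: prod_cases4) auto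
  have lu: "length u = k" "length v = k" using l F by auto
  have "set (map (\<lambda>i. (u @ v) ! (\<sigma> i)) [0..<k]) \<union> set (map (\<lambda>i. (u @ v) ! (\<sigma> (k + i))) [0..<k]) \<subseteq> V"
    unfolding perm_labels[OF s lu] using w F by (simp add: wfg_simp)
  then show ?thesis using w lu unfolding F perm_simp wfg_simp by simp
qed

lemma P_props: "F \<in> P k \<Longrightarrow> wfg F \<and> lenk k F"
proof (induction rule: P.induct)
  case (base G)
  then show ?case unfolding Q_def using QP_props QS_props by blast
next
  case (series F F')
  then show ?case using wfg_comp lenk_comp by blast
next
  case (parallel F H)
  then show ?case using wfg_comp lenk_comp QP_props by blast
next
  case (perm F \<sigma>)
  then show ?case using perm_props by blast
next
  case (iso F G)
  then show ?case using iso_props by blast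
qed

lemma Cl_minor: "Cl k F \<Longrightarrow> bminor F F' \<Longrightarrow> Cl k F' \<and> F' \<in> P k"
  unfolding Cl_def using bminor_trans bminor_refl by blast

lemma Cl_iso: "wfg F \<Longrightarrow> Cl k F \<Longrightarrow> bg_iso F G \<Longrightarrow> Cl k G"
  unfolding Cl_def
proof (intro allI impI)
  fix G' assume w: "wfg F" and c: "\<forall>G. bminor F G \<longrightarrow> G \<in> P k" and i: "bg_iso F G" and m: "bminor G G'"
  obtain F' where "bminor F F'" "bg_iso F' G'" using pullback[OF m w i] by blast
  then show "G' \<in> P k" using c P.iso by blast
qed

lemma Cl_parallel:
  assumes F: "F \<in> P k" "Cl k F" and H: "H \<in> QP k"
  shows "Cl k (bg_parallel F H)"
  unfolding Cl_def
proof (intro allI impI)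
  fix G assume "bminor (bg_parallel F H) G"
  then have "\<exists>F' H'. F' \<in> P k \<and> Cl k F' \<and> H' \<in> QP k \<and> bg_iso (bg_parallel F' H') G"
    unfolding bminor_def
  proof (induction rule: rtranclp_induct)
    case base
    have "wfg (bg_parallel F H)" using wfg_comp P_props[OF F(1)] QP_props[OF H] by blast
    then show ?case using F H iso_refl by blast
  next
    case (step y z)
    then obtain F' H' where FH: "F' \<in> P k" "Cl k F'" "H' \<in> QP k" "bg_iso (bg_parallel F' H') y" by blast
    have wF': "wfg F'" "lenk k F'" using P_props[OF FH(1)] by auto
    have wc: "wfg (bg_parallel F' H')" using wfg_comp wF'(1) QP_props[OF FH(3)] by blast
    obtain z' where z': "bminor_step (bg_parallel F' H') z'" "bg_iso z' z"
      using pullback_step[OF wc FH(4) step(2)] by blast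
    obtain F'' H'' where FH'': "bminor F' F''" "H'' \<in> QP k" "bg_iso (bg_parallel F'' H'') z'"
      using parallel_step[OF wF' FH(3) z'(1)] by blast
    have c'': "Cl k F''" "F'' \<in> P k" using Cl_minor[OF FH(2) FH''(1)] by auto
    have "wfg (bg_parallel F'' H'')" using wfg_comp P_props[OF c''(2)] QP_props[OF FH''(2)] by blast
    then have "bg_iso (bg_parallel F'' H'') z" using iso_trans FH''(3) z'(2) by blast
    then show ?case using c'' FH''(2) by blast
  qed
  then obtain F' H' where "F' \<in> P k" "H' \<in> QP k" "bg_iso (bg_parallel F' H') G" by blast
  then show "G \<in> P k" using P.parallel P.iso by blast
qed

lemma Cl_series:
  assumes A: "A \<in> P k" "Cl k A" and B: "B \<in> P k" "Cl k B"
  shows "Cl k (bg_series A B)"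
  unfolding Cl_def
proof (intro allI impI)
  fix G assume "bminor (bg_series A B) G"
  then have "\<exists>A' B'. A' \<in> P k \<and> Cl k A' \<and> B' \<in> P k \<and> Cl k B' \<and> bg_iso (bg_series A' B') G"
    unfolding bminor_def
  proof (induction rule: rtranclp_induct)
    case base
    have "wfg (bg_series A B)" using wfg_comp P_props[OF A(1)] P_props[OF B(1)] by blast
    then show ?case using A B iso_refl by blast
  next
    case (step y z)
    then obtain A' B' where AB: "A' \<in> P k" "Cl k A'" "B' \<in> P k" "Cl k B'" "bg_iso (bg_series A' B') y" by blast
    have wA': "wfg A'" "lenk k A'" using P_props[OF AB(1)] by auto
    have wB': "wfg B'" "lenk k B'" using P_props[OF AB(3)] by auto
    have wc: "wfg (bg_series A' B')" using wfg_comp wA'(1) wB'(1) by blast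
    obtain z' where z': "bminor_step (bg_series A' B') z'" "bg_iso z' z"
      using pullback_step[OF wc AB(5) step(2)] by blast
    from series_step[OF wA'(1) wB'(1) wA'(2) wB'(2) z'(1)] show ?case
    proof (elim disjE exE conjE)
      fix A'' B'' assume h: "bminor A' A''" "bminor B' B''" "bg_iso (bg_series A'' B'') z'"
      have cA: "Cl k A''" "A'' \<in> P k" using Cl_minor[OF AB(2) h(1)] by auto
      have cB: "Cl k B''" "B'' \<in> P k" using Cl_minor[OF AB(4) h(2)] by auto
      have "wfg (bg_series A'' B'')" using wfg_comp P_props[OF cA(2)] P_props[OF cB(2)] by blast
      then have "bg_iso (bg_series A'' B'') z" using iso_trans h(3) z'(2) by blast
      then show ?thesis using cA cB by blast
    next
      fix A1 B1 X A2 assume h: "bminor A' A1" "bminor B' B1" "X \<in> QP k" "bg_iso (bg_parallel A1 X) A2"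
        "bg_iso (bg_series A2 B1) z'"
      have cA: "Cl k A1" "A1 \<in> P k" using Cl_minor[OF AB(2) h(1)] by auto
      have cB: "Cl k B1" "B1 \<in> P k" using Cl_minor[OF AB(4) h(2)] by auto
      have pX: "bg_parallel A1 X \<in> P k" using P.parallel cA(2) h(3) by blast
      have cX: "Cl k (bg_parallel A1 X)" using Cl_parallel cA(2,1) h(3) by blast
      have wX: "wfg (bg_parallel A1 X)" using P_props[OF pX] by blast
      have cA2: "Cl k A2" "A2 \<in> P k" using Cl_iso[OF wX cX h(4)] P.iso[OF pX h(4)] by auto
      have "wfg (bg_series A2 B1)" using wfg_comp P_props[OF cA2(2)] P_props[OF cB(2)] by blast
      then have "bg_iso (bg_series A2 B1) z" using iso_trans h(5) z'(2) by blast
      then show ?thesis using cA2 cB by blast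
    qed
  qed
  then obtain A' B' where "A' \<in> P k" "B' \<in> P k" "bg_iso (bg_series A' B') G" by blast
  then show "G \<in> P k" using P.series P.iso by blast
qed

lemma Cl_perm:
  assumes F: "F \<in> P k" "Cl k F" and s: "\<sigma> \<in> rot_group k"
  shows "Cl k (bg_perm \<sigma> F)"
  unfolding Cl_def
proof (intro allI impI)
  fix G assume "bminor (bg_perm \<sigma> F) G"
  then have "\<exists>F'. bminor F F' \<and> G = bg_perm \<sigma> F'"
    unfolding bminor_def
  proof (induction rule: rtranclp_induct)
    case base then show ?case by blast
  next
    case (step y z)
    then obtain F' where F': "bminor_step\<^sup>*\<^sup>* F F'" "y = bg_perm \<sigma> F'" by blast
    have "lenk k F'" using lenk_minor[OF F'(1)[folded bminor_def]] P_props[OF F(1)] by blast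
    then obtain F'' where h: "bminor_step F' F''" "z = bg_perm \<sigma> F''" using perm_step[OF s] step(2) F'(2) by blast
    have "bminor_step\<^sup>*\<^sup>* F F''" using F'(1) h(1) by (rule rtranclp.rtrancl_into_rtrancl)
    then show ?case using h(2) by blast
  qed
  then obtain F' where "bminor F F'" "G = bg_perm \<sigma> F'" by blast
  then show "G \<in> P k" using Cl_minor[OF F(2)] P.perm s by blast
qed

lemma Q_minor: "G \<in> Q k \<Longrightarrow> bminor G G' \<Longrightarrow> G' \<in> Q k"
  unfolding Q_def using QP_minor QS_minor by blast

lemma main: "F \<in> P k \<Longrightarrow> Cl k F"
proof (induction rule: P.induct)
  case (base G)
  then show ?case unfolding Cl_def using Q_minor P.base by blast
next
  case (series F F')
  then show ?case using Cl_series by blast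
next
  case (parallel F H)
  then show ?case using Cl_parallel by blast
next
  case (perm F \<sigma>)
  then show ?case using Cl_perm by blast
next
  case (iso F G)
  then show ?case using Cl_iso P_props by blast
qed

theorem lemma4p8:
  fixes k :: nat and F G :: bgraph
  assumes "F \<in> P k" and "bminor F G"
  shows "G \<in> P k"
  using main[OF assms(1)] assms(2) unfolding Cl_def by blast

end
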